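(* On the unit sphere $S^2\subset\mathbb R^3$ consider the motion $\ddot x+|\dot x|^2x=A^2x-|Ax|^2x$ of a particle under the potential $V(x)=-\tfrac12|Ax|^2$, where $A=\mathrm{diag}(\lambda_1,\lambda_2,\lambda_3)$ with $\lambda_2>\lambda_1>\lambda_3=0$. For the associated Hamiltonian flow on $T^*S^2$, the points $\mathcal P=(0,0,-1,0,0,0)$ and $\widetilde{\mathcal P}=(0,0,1,0,0,0)$ are hyperbolic equilibria, and the stable invariant manifold of $\widetilde{\mathcal P}$ and the unstable invariant manifold of $\mathcal P$ intersect transversely (inside their common energy level) along the heteroclinic orbit $\gamma$ from $\mathcal P$ to $\widetilde{\mathcal P}$ that runs along the half great circle $\{x_2=0,\ x_1>0\}$. *)

theory Defs
  imports "HOL-Analysis.Analysis"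
begin

text \<open>Phase space coordinates: a state is a pair (x, p) of vectors in R^3 (position, momentum).\<close>
type_synonym state = "(real^3) \<times> (real^3)"

definition Amat :: "real \<Rightarrow> real \<Rightarrow> real \<Rightarrow> real^3 \<Rightarrow> real^3" where
  "Amat l1 l2 l3 x = vector [l1 * x$1, l2 * x$2, l3 * x$3]"

text \<open>Cotangent bundle T*S^2 embedded in R^6: |x| = 1, x . p = 0.\<close>
definition TS2 :: "state set" where
  "TS2 = {(x, p). norm x = 1 \<and> inner x p = 0}"

text \<open>Vector field of the motion x'' + |x'|^2 x = A^2 x - |Ax|^2 x, written as
  x' = p, p' = A^2 x - |Ax|^2 x - |p|^2 x.\<close>
definition field :: "real \<Rightarrow> real \<Rightarrow> real \<Rightarrow> state \<Rightarrow> state" where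
  "field l1 l2 l3 z = (case z of (x, p) \<Rightarrow>
     (p, Amat l1 l2 l3 (Amat l1 l2 l3 x) - (norm (Amat l1 l2 l3 x))^2 *\<^sub>R x - (norm p)^2 *\<^sub>R x))"

definition energy :: "real \<Rightarrow> real \<Rightarrow> real \<Rightarrow> state \<Rightarrow> real" where
  "energy l1 l2 l3 z = (case z of (x, p) \<Rightarrow> (norm p)^2 / 2 - (norm (Amat l1 l2 l3 x))^2 / 2)"

definition energy_level :: "real \<Rightarrow> real \<Rightarrow> real \<Rightarrow> state \<Rightarrow> state set" where
  "energy_level l1 l2 l3 q = {z \<in> TS2. energy l1 l2 l3 z = energy l1 l2 l3 q}"

definition is_traj :: "('a::real_normed_vector \<Rightarrow> 'a) \<Rightarrow> (real \<Rightarrow> 'a) \<Rightarrow> bool" where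
  "is_traj F y \<longleftrightarrow> (\<forall>t. (y has_vector_derivative F (y t)) (at t))"

definition stable_set :: "('a::real_normed_vector \<Rightarrow> 'a) \<Rightarrow> 'a set \<Rightarrow> 'a \<Rightarrow> 'a set" where
  "stable_set F M q = {z \<in> M. \<exists>y. is_traj F y \<and> y 0 = z \<and> (y \<longlongrightarrow> q) at_top}"

definition unstable_set :: "('a::real_normed_vector \<Rightarrow> 'a) \<Rightarrow> 'a set \<Rightarrow> 'a \<Rightarrow> 'a set" where
  "unstable_set F M q = {z \<in> M. \<exists>y. is_traj F y \<and> y 0 = z \<and> (y \<longlongrightarrow> q) at_bot}"

text \<open>(Bouligand) tangent cone of a set S at z; for a C^1 submanifold it is the tangent space.\<close>
definition tangent_cone :: "'a::real_normed_vector set \<Rightarrow> 'a \<Rightarrow> 'a set" where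
  "tangent_cone S z = {v. \<exists>zs ts. (\<forall>n. zs n \<in> S) \<and> zs \<longlonglongrightarrow> z \<and> (\<forall>n. ts n > 0) \<and>
       ts \<longlonglongrightarrow> 0 \<and> (\<lambda>n. (1 / ts n) *\<^sub>R (zs n - z)) \<longlonglongrightarrow> v}"

text \<open>Hyperbolic equilibrium of F on the invariant manifold M: F q = 0 and the linearisation
  DF(q), restricted to the tangent space T_q M, has no eigenvalue on the imaginary axis
  (i omega with eigenvector u + i w, u, w in T_q M, written out in real form).\<close>
definition hyperbolic_equilibrium :: "('a::real_normed_vector \<Rightarrow> 'a) \<Rightarrow> 'a set \<Rightarrow> 'a \<Rightarrow> bool" where
  "hyperbolic_equilibrium F M q \<longleftrightarrow> q \<in> M \<and> F q = 0 \<and>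
     (\<exists>L. (F has_derivative L) (at q) \<and>
        (\<forall>u \<in> span (tangent_cone M q). \<forall>w \<in> span (tangent_cone M q). \<forall>\<omega>::real.
            L u = - (\<omega> *\<^sub>R w) \<and> L w = \<omega> *\<^sub>R u \<longrightarrow> u = 0 \<and> w = 0))"

definition transversal_at :: "'a::real_normed_vector set \<Rightarrow> 'a set \<Rightarrow> 'a set \<Rightarrow> 'a \<Rightarrow> bool" where
  "transversal_at W1 W2 E z \<longleftrightarrow> z \<in> W1 \<and> z \<in> W2 \<and>
     {a + b | a b. a \<in> span (tangent_cone W1 z) \<and> b \<in> span (tangent_cone W2 z)}
       = span (tangent_cone E z)"

end

theory Submission
  imports Defs
begin


lemma vec3_axis: "(vector [a,b,c] :: real^3) = a *\<^sub>R axis 1 1 + b *\<^sub>R axis 2 1 + c *\<^sub>R axis 3 1"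
  by (simp add: vec_eq_iff forall_3 axis_def)

lemma vec3_deriv:
  assumes "(f1 has_real_derivative d1) F" "(f2 has_real_derivative d2) F" "(f3 has_real_derivative d3) F"
  shows "((\<lambda>t. vector [f1 t, f2 t, f3 t] :: real^3) has_vector_derivative vector [d1,d2,d3]) F"
proof -
  have "((\<lambda>t. f1 t *\<^sub>R axis 1 (1::real) :: real^3) has_vector_derivative d1 *\<^sub>R axis 1 1) F"
    using bounded_linear.has_vector_derivative[OF bounded_linear_scaleR_left assms(1)[unfolded has_real_derivative_iff_has_vector_derivative]] .
  moreover have "((\<lambda>t. f2 t *\<^sub>R axis 2 (1::real) :: real^3) has_vector_derivative d2 *\<^sub>R axis 2 1) F"
    using bounded_linear.has_vector_derivative[OF bounded_linear_scaleR_left assms(2)[unfolded has_real_derivative_iff_has_vector_derivative]] .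
  moreover have "((\<lambda>t. f3 t *\<^sub>R axis 3 (1::real) :: real^3) has_vector_derivative d3 *\<^sub>R axis 3 1) F"
    using bounded_linear.has_vector_derivative[OF bounded_linear_scaleR_left assms(3)[unfolded has_real_derivative_iff_has_vector_derivative]] .
  ultimately show ?thesis unfolding vec3_axis by (intro has_vector_derivative_add)
qed

lemma norm3_sq: "norm (v::real^3) ^ 2 = v$1^2 + v$2^2 + v$3^2"
  by (simp only: power2_norm_eq_inner) (simp add: inner_vec_def sum_3 power2_eq_square)

lemma inner3: "inner (u::real^3) v = u$1 * v$1 + u$2 * v$2 + u$3 * v$3"
  by (simp add: inner_vec_def sum_3)

lemma Amat_nth [simp]: "Amat l1 l2 l3 x $ 1 = l1 * x$1" "Amat l1 l2 l3 x $ 2 = l2 * x$2"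
  "Amat l1 l2 l3 x $ 3 = l3 * x$3"
  by (simp_all add: Amat_def)

lemma Amat_linear: "linear (Amat l1 l2 l3)"
  by (rule linearI) (simp_all add: vec_eq_iff forall_3 algebra_simps)

lemma Amat_bl: "bounded_linear (Amat l1 l2 l3)"
  using Amat_linear linear_conv_bounded_linear by blast

lemma field_eq: "field l1 l2 l3 z = (snd z, Amat l1 l2 l3 (Amat l1 l2 l3 (fst z))
   - (norm (Amat l1 l2 l3 (fst z)))^2 *\<^sub>R fst z - (norm (snd z))^2 *\<^sub>R fst z)"
  by (cases z) (simp add: field_def)

lemma energy_eq: "energy l1 l2 l3 z = (norm (snd z))^2 / 2 - (norm (Amat l1 l2 l3 (fst z)))^2 / 2"
  by (cases z) (simp add: energy_def)

lemma traj_comp: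
  assumes "is_traj F (y :: real \<Rightarrow> state)"
  shows "((\<lambda>t. fst (y t) $ i) has_real_derivative fst (F (y t)) $ i) (at t)"
        "((\<lambda>t. snd (y t) $ i) has_real_derivative snd (F (y t)) $ i) (at t)"
proof -
  have d: "(y has_vector_derivative F (y t)) (at t)" using assms is_traj_def by auto
  have bl1: "bounded_linear (\<lambda>z::state. fst z $ i)"
    by (intro bounded_linear_compose[OF bounded_linear_vec_nth bounded_linear_fst])
  have bl2: "bounded_linear (\<lambda>z::state. snd z $ i)"
    by (intro bounded_linear_compose[OF bounded_linear_vec_nth bounded_linear_snd])
  from bounded_linear.has_vector_derivative[OF bl1 d] bounded_linear.has_vector_derivative[OF bl2 d]
  show "((\<lambda>t. fst (y t) $ i) has_real_derivative fst (F (y t)) $ i) (at t)"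
        "((\<lambda>t. snd (y t) $ i) has_real_derivative snd (F (y t)) $ i) (at t)"
    by (simp_all add: has_real_derivative_iff_has_vector_derivative)
qed

lemma zero_lim: "(f \<longlongrightarrow> L) sequentially \<Longrightarrow> (\<And>n. f n = 0) \<Longrightarrow> L = (0::real)"
proof -
  assume a: "(f \<longlongrightarrow> L) sequentially" and b: "\<And>n. f n = 0"
  have "f = (\<lambda>n. 0)" using b by auto
  with a show "L = 0" using LIMSEQ_unique tendsto_const by metis
qed

lemma tc_seq:
  assumes "v \<in> tangent_cone S (z :: state)"
  obtains zs ts where "\<forall>n. zs n \<in> S" "zs \<longlonglongrightarrow> z" "\<forall>n. ts n > 0" "ts \<longlonglongrightarrow> 0"
    "(\<lambda>n. (1/ts n) *\<^sub>R (fst (zs n) - fst z)) \<longlonglongrightarrow> fst v"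
    "(\<lambda>n. (1/ts n) *\<^sub>R (snd (zs n) - snd z)) \<longlonglongrightarrow> snd v"
proof -
  from assms obtain zs ts where h: "\<forall>n. zs n \<in> S" "zs \<longlonglongrightarrow> z" "\<forall>n. ts n > 0" "ts \<longlonglongrightarrow> 0"
    "(\<lambda>n. (1 / ts n) *\<^sub>R (zs n - z)) \<longlonglongrightarrow> v" unfolding tangent_cone_def by blast
  from tendsto_fst[OF h(5)] tendsto_snd[OF h(5)]
  have "(\<lambda>n. (1/ts n) *\<^sub>R (fst (zs n) - fst z)) \<longlonglongrightarrow> fst v"
    "(\<lambda>n. (1/ts n) *\<^sub>R (snd (zs n) - snd z)) \<longlonglongrightarrow> snd v" by simp_all
  with h that show ?thesis by blast
qed

lemma tc_TS2:
  assumes "v \<in> tangent_cone S z" "S \<subseteq> TS2" "z \<in> TS2"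
  shows "inner (fst z) (fst v) = 0" "inner (fst v) (snd z) + inner (fst z) (snd v) = 0"
proof -
  obtain zs ts where h: "\<forall>n. zs n \<in> S" "zs \<longlonglongrightarrow> z" "\<forall>n. ts n > 0" "ts \<longlonglongrightarrow> 0"
    "(\<lambda>n. (1/ts n) *\<^sub>R (fst (zs n) - fst z)) \<longlonglongrightarrow> fst v"
    "(\<lambda>n. (1/ts n) *\<^sub>R (snd (zs n) - snd z)) \<longlonglongrightarrow> snd v"
    using tc_seq[OF assms(1)] by blast
  have xn: "(\<lambda>n. fst (zs n)) \<longlonglongrightarrow> fst z" and pn: "(\<lambda>n. snd (zs n)) \<longlonglongrightarrow> snd z"
    using h(2) by (auto intro: tendsto_fst tendsto_snd)
  have zT: "norm (fst z) = 1" "inner (fst z) (snd z) = 0" using assms(3) by (auto simp: TS2_def)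
  have nT: "norm (fst (zs n)) = 1" "inner (fst (zs n)) (snd (zs n)) = 0" for n
  proof -
    have "zs n \<in> TS2" using h(1) assms(2) by auto
    then show "norm (fst (zs n)) = 1" "inner (fst (zs n)) (snd (zs n)) = 0"
      by (cases "zs n", auto simp: TS2_def)+
  qed
  have "(\<lambda>n. inner ((1/ts n) *\<^sub>R (fst (zs n) - fst z)) (fst (zs n) + fst z)) \<longlonglongrightarrow> inner (fst v) (fst z + fst z)"
    by (intro tendsto_intros h(5) xn)
  moreover have "inner ((1/ts n) *\<^sub>R (fst (zs n) - fst z)) (fst (zs n) + fst z) = 0" for n
  proof -
    have "inner ((1/ts n) *\<^sub>R (fst (zs n) - fst z)) (fst (zs n) + fst z)
        = (1/ts n) * (inner (fst (zs n)) (fst (zs n)) - inner (fst z) (fst z))"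
      by (simp add: algebra_simps inner_add_right inner_diff_left inner_commute)
    also have "\<dots> = 0" using nT(1)[of n] zT(1) by (simp flip: power2_norm_eq_inner)
    finally show ?thesis .
  qed
  ultimately have "inner (fst v) (fst z + fst z) = 0" by (rule zero_lim)
  then show "inner (fst z) (fst v) = 0" unfolding inner_add_right by (simp add: inner_commute)
  have "(\<lambda>n. inner ((1/ts n) *\<^sub>R (fst (zs n) - fst z)) (snd (zs n)) + inner (fst z) ((1/ts n) *\<^sub>R (snd (zs n) - snd z)))
     \<longlonglongrightarrow> inner (fst v) (snd z) + inner (fst z) (snd v)"
    by (intro tendsto_intros h(5,6) pn)
  moreover have "inner ((1/ts n) *\<^sub>R (fst (zs n) - fst z)) (snd (zs n)) + inner (fst z) ((1/ts n) *\<^sub>R (snd (zs n) - snd z)) = 0" for n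
  proof -
    have "inner ((1/ts n) *\<^sub>R (fst (zs n) - fst z)) (snd (zs n)) + inner (fst z) ((1/ts n) *\<^sub>R (snd (zs n) - snd z))
        = (1/ts n) * (inner (fst (zs n)) (snd (zs n)) - inner (fst z) (snd z))"
      by (simp add: algebra_simps inner_diff_right inner_diff_left)
    also have "\<dots> = 0" using nT(2)[of n] zT(2) by simp
    finally show ?thesis .
  qed
  ultimately show "inner (fst v) (snd z) + inner (fst z) (snd v) = 0" by (rule zero_lim)
qed

lemma quad_diff: "inner (c *\<^sub>R (a - b)) (a + b) = c * (inner a a - inner (b::'a::real_inner) b)"
  by (simp add: inner_diff_left inner_add_right inner_commute algebra_simps)

lemma tc_energy:
  assumes "v \<in> tangent_cone S z" "\<forall>w\<in>S. energy l1 l2 l3 w = c" "energy l1 l2 l3 z = c"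
  shows "inner (snd z) (snd v) = inner (Amat l1 l2 l3 (fst z)) (Amat l1 l2 l3 (fst v))"
proof -
  let ?A = "Amat l1 l2 l3"
  note lin = Amat_linear[of l1 l2 l3]
  obtain zs ts where h: "\<forall>n. zs n \<in> S" "zs \<longlonglongrightarrow> z" "\<forall>n. ts n > 0" "ts \<longlonglongrightarrow> 0"
    "(\<lambda>n. (1/ts n) *\<^sub>R (fst (zs n) - fst z)) \<longlonglongrightarrow> fst v"
    "(\<lambda>n. (1/ts n) *\<^sub>R (snd (zs n) - snd z)) \<longlonglongrightarrow> snd v"
    using tc_seq[OF assms(1)] by blast
  have xn: "(\<lambda>n. fst (zs n)) \<longlonglongrightarrow> fst z" and pn: "(\<lambda>n. snd (zs n)) \<longlonglongrightarrow> snd z"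
    using h(2) by (auto intro: tendsto_fst tendsto_snd)
  have Axn: "(\<lambda>n. ?A (fst (zs n))) \<longlonglongrightarrow> ?A (fst z)"
    by (rule bounded_linear.tendsto[OF Amat_bl xn])
  have Aa: "(\<lambda>n. ?A ((1/ts n) *\<^sub>R (fst (zs n) - fst z))) \<longlonglongrightarrow> ?A (fst v)"
    by (rule bounded_linear.tendsto[OF Amat_bl h(5)])
  have en: "energy l1 l2 l3 (zs n) = c" for n using h(1) assms(2) by auto
  have "(\<lambda>n. inner ((1/ts n) *\<^sub>R (snd (zs n) - snd z)) (snd (zs n) + snd z)
        - inner (?A ((1/ts n) *\<^sub>R (fst (zs n) - fst z))) (?A (fst (zs n)) + ?A (fst z)))
     \<longlonglongrightarrow> inner (snd v) (snd z + snd z) - inner (?A (fst v)) (?A (fst z) + ?A (fst z))"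
    by (intro tendsto_intros h(6) pn Aa Axn)
  moreover have "inner ((1/ts n) *\<^sub>R (snd (zs n) - snd z)) (snd (zs n) + snd z)
        - inner (?A ((1/ts n) *\<^sub>R (fst (zs n) - fst z))) (?A (fst (zs n)) + ?A (fst z)) = 0" for n
  proof -
    have eqA: "?A ((1/ts n) *\<^sub>R (fst (zs n) - fst z)) = (1/ts n) *\<^sub>R (?A (fst (zs n)) - ?A (fst z))"
      by (simp add: linear_scale[OF lin] linear_diff[OF lin])
    have "inner ((1/ts n) *\<^sub>R (snd (zs n) - snd z)) (snd (zs n) + snd z)
        - inner (?A ((1/ts n) *\<^sub>R (fst (zs n) - fst z))) (?A (fst (zs n)) + ?A (fst z))
      = (1/ts n) * ((inner (snd (zs n)) (snd (zs n)) - inner (?A (fst (zs n))) (?A (fst (zs n))))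
                   - (inner (snd z) (snd z) - inner (?A (fst z)) (?A (fst z))))"
      unfolding eqA quad_diff by (simp add: algebra_simps)
    also have "\<dots> = (1/ts n) * (2 * energy l1 l2 l3 (zs n) - 2 * energy l1 l2 l3 z)"
      by (simp add: energy_eq power2_norm_eq_inner)
    also have "\<dots> = 0" using en assms(3) by simp
    finally show ?thesis .
  qed
  ultimately have "inner (snd v) (snd z + snd z) - inner (?A (fst v)) (?A (fst z) + ?A (fst z)) = 0"
    by (rule zero_lim)
  then show ?thesis unfolding inner_add_right by (simp add: inner_commute)
qed

lemma tc_deriv:
  fixes g :: "real \<Rightarrow> 'a::real_normed_vector"
  assumes "(g has_vector_derivative v) (at 0)" "\<And>h. h > 0 \<Longrightarrow> g h \<in> S"
  shows "v \<in> tangent_cone S (g 0)"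
proof -
  define ts where "ts n = inverse (real (Suc n))" for n
  have tpos: "ts n > 0" for n by (simp add: ts_def)
  have t0: "ts \<longlonglongrightarrow> 0" unfolding ts_def by (rule LIMSEQ_inverse_real_of_nat)
  have tat: "filterlim ts (at 0) sequentially"
  proof (rule filterlim_atI[OF t0])
    have "\<forall>n. ts n \<noteq> 0" using tpos by (metis less_irrefl)
    then show "\<forall>\<^sub>F n in sequentially. ts n \<noteq> 0" by (rule always_eventually)
  qed
  have cont: "isCont g 0" using assms(1) by (rule has_vector_derivative_continuous)
  have gz: "(\<lambda>n. g (ts n)) \<longlonglongrightarrow> g 0" by (rule isCont_tendsto_compose[OF cont t0])
  have "(g has_derivative (\<lambda>h. h *\<^sub>R v)) (at 0)" using assms(1) by (simp add: has_vector_derivative_def)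
  then have lim0: "((\<lambda>y. (1 / norm (y - 0)) *\<^sub>R (g y - (g 0 + (y - 0) *\<^sub>R v))) \<longlongrightarrow> 0) (at 0)"
    by (simp add: has_derivative_at2)
  have "(\<lambda>n. (1 / norm (ts n - 0)) *\<^sub>R (g (ts n) - (g 0 + (ts n - 0) *\<^sub>R v))) \<longlonglongrightarrow> 0"
    by (rule filterlim_compose[OF lim0 tat])
  then have "(\<lambda>n. (1 / norm (ts n - 0)) *\<^sub>R (g (ts n) - (g 0 + (ts n - 0) *\<^sub>R v)) + v) \<longlonglongrightarrow> 0 + v"
    by (intro tendsto_intros)
  moreover have "(1 / norm (ts n - 0)) *\<^sub>R (g (ts n) - (g 0 + (ts n - 0) *\<^sub>R v)) + v = (1 / ts n) *\<^sub>R (g (ts n) - g 0)" for n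
    using tpos[of n] by (simp add: algebra_simps)
  ultimately have q: "(\<lambda>n. (1 / ts n) *\<^sub>R (g (ts n) - g 0)) \<longlonglongrightarrow> v" by simp
  show ?thesis unfolding tangent_cone_def mem_Collect_eq
    apply (rule exI[of _ "\<lambda>n. g (ts n)"], rule exI[of _ ts])
    using assms(2) tpos t0 gz q by simp
qed


lemma Amat_deriv [derivative_intros]:
  "(f has_derivative f') F \<Longrightarrow> ((\<lambda>x. Amat l1 l2 l3 (f x)) has_derivative (\<lambda>x. Amat l1 l2 l3 (f' x))) F"
  by (rule bounded_linear.has_derivative[OF Amat_bl])

lemma Amat_zero [simp]: "Amat l1 l2 l3 0 = 0"
  by (simp add: vec_eq_iff forall_3)

lemma field_fun: "field l1 l2 l3 = (\<lambda>z. (snd z, Amat l1 l2 l3 (Amat l1 l2 l3 (fst z))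
   - (inner (Amat l1 l2 l3 (fst z)) (Amat l1 l2 l3 (fst z))) *\<^sub>R fst z - (inner (snd z) (snd z)) *\<^sub>R fst z))"
  by (rule ext) (simp add: field_eq power2_norm_eq_inner)

lemma field_has_derivative:
  "(field l1 l2 l3 has_derivative (\<lambda>h. (snd h, Amat l1 l2 l3 (Amat l1 l2 l3 (fst h))
     - (inner (Amat l1 l2 l3 (fst z)) (Amat l1 l2 l3 (fst h)) + inner (Amat l1 l2 l3 (fst h)) (Amat l1 l2 l3 (fst z))) *\<^sub>R fst z
     - (inner (Amat l1 l2 l3 (fst z)) (Amat l1 l2 l3 (fst z))) *\<^sub>R fst h
     - (inner (snd z) (snd h) + inner (snd h) (snd z)) *\<^sub>R fst z
     - (inner (snd z) (snd z)) *\<^sub>R fst h))) (at z)"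
  unfolding field_fun
  by (auto intro!: derivative_eq_intros simp: algebra_simps)

lemma norm_vec3: "norm (vector [a,b,c] :: real^3) = sqrt (a^2 + b^2 + c^2)"
  by (simp add: norm_eq_sqrt_inner inner3 power2_eq_square)

lemma hyp_pole:
  assumes l: "0 < l1" "0 < l2" "l3 = 0" and s: "s^2 = 1"
  shows "hyperbolic_equilibrium (field l1 l2 l3) TS2 (vector [0,0,s], 0)"
proof -
  let ?P = "(vector [0,0,s] :: real^3, 0 :: real^3)"
  let ?A = "Amat l1 l2 l3"
  have PT: "?P \<in> TS2" using s by (simp add: TS2_def norm_vec3)
  have AP: "?A (vector [0,0,s]) = 0" using l by (simp add: vec_eq_iff forall_3)
  have FP: "field l1 l2 l3 ?P = 0" by (simp add: field_eq AP prod_eq_iff)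
  define L where "L = (\<lambda>h::state. (snd h, ?A (?A (fst h))))"
  have dL: "(field l1 l2 l3 has_derivative L) (at ?P)"
    using field_has_derivative[of l1 l2 l3 ?P] by (simp add: AP L_def)
  define V where "V = {h::state. fst h $ 3 = 0 \<and> snd h $ 3 = 0}"
  have subV: "subspace V" unfolding subspace_def V_def by simp
  have tcV: "tangent_cone TS2 ?P \<subseteq> V"
  proof
    fix v assume v: "v \<in> tangent_cone TS2 ?P"
    from tc_TS2[OF v order_refl PT] show "v \<in> V"
      by (simp add: V_def inner3) (use s in \<open>auto simp: power2_eq_square\<close>)
  qed
  have spV: "span (tangent_cone TS2 ?P) \<subseteq> V" by (rule span_minimal[OF tcV subV])
  have key: "u = 0 \<and> w = 0" if "u \<in> V" "w \<in> V" "L u = - (\<omega> *\<^sub>R w)" "L w = \<omega> *\<^sub>R u" for u w \<omega>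
  proof -
    obtain a b where u: "u = (a,b)" by (cases u)
    obtain c d where w: "w = (c,d)" by (cases w)
    have e: "b = - (\<omega> *\<^sub>R c)" "?A (?A a) = - (\<omega> *\<^sub>R d)" "d = \<omega> *\<^sub>R a" "?A (?A c) = \<omega> *\<^sub>R b"
      using that(3,4) by (simp_all add: L_def u w)
    have z3: "a $ 3 = 0" "b $ 3 = 0" "c $ 3 = 0" "d $ 3 = 0" using that(1,2) by (simp_all add: V_def u w)
    have "l1 * (l1 * a$1) = - \<omega> * (\<omega> * a$1)" "l2 * (l2 * a$2) = - \<omega> * (\<omega> * a$2)"
      "l1 * (l1 * c$1) = - \<omega> * (\<omega> * c$1)" "l2 * (l2 * c$2) = - \<omega> * (\<omega> * c$2)"
      using e by (auto simp: vec_eq_iff forall_3)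
    then have "(l1^2 + \<omega>^2) * a$1 = 0" "(l2^2 + \<omega>^2) * a$2 = 0"
      "(l1^2 + \<omega>^2) * c$1 = 0" "(l2^2 + \<omega>^2) * c$2 = 0"
      by (simp_all add: algebra_simps power2_eq_square)
    moreover have "l1^2 + \<omega>^2 > 0" "l2^2 + \<omega>^2 > 0" using l by (simp_all add: add_pos_nonneg)
    ultimately have "a$1 = 0" "a$2 = 0" "c$1 = 0" "c$2 = 0" using l by auto
    then have "a = 0" "c = 0" using z3 by (simp_all add: vec_eq_iff forall_3)
    then show ?thesis using e by (simp add: u w zero_prod_def)
  qed
  show ?thesis unfolding hyperbolic_equilibrium_def
    using PT FP dL key spV by blast
qed

subsection \<open>Invariance of TS2 and conservation of energy\<close>

lemma inner_AA: "inner x (Amat l1 l2 l3 (Amat l1 l2 l3 y)) = inner (Amat l1 l2 l3 x) (Amat l1 l2 l3 y)"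
  by (simp add: inner3 algebra_simps)

lemma traj_vec_derivs:
  assumes "is_traj (field l1 l2 l3) y"
  shows "((\<lambda>t. fst (y t)) has_vector_derivative snd (y t)) (at t)"
    "((\<lambda>t. snd (y t)) has_vector_derivative snd (field l1 l2 l3 (y t))) (at t)"
proof -
  have d: "(y has_vector_derivative field l1 l2 l3 (y t)) (at t)" using assms is_traj_def by auto
  from bounded_linear.has_vector_derivative[OF bounded_linear_fst d]
  show "((\<lambda>t. fst (y t)) has_vector_derivative snd (y t)) (at t)" by (simp add: field_eq)
  from bounded_linear.has_vector_derivative[OF bounded_linear_snd d]
  show "((\<lambda>t. snd (y t)) has_vector_derivative snd (field l1 l2 l3 (y t))) (at t)" by simp
qed

lemma inner_vderiv:
  assumes "(f has_vector_derivative f') (at t)" "(g has_vector_derivative g') (at t)"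
  shows "((\<lambda>t. inner (f t) (g t)) has_real_derivative (inner (f t) g' + inner f' (g t))) (at t)"
  using bounded_bilinear.has_vector_derivative[OF bounded_bilinear_inner assms]
  by (simp add: has_real_derivative_iff_has_vector_derivative)

lemma traj_fg_derivs:
  assumes "is_traj (field l1 l2 l3) y"
  defines "x \<equiv> \<lambda>t. fst (y t)" and "p \<equiv> \<lambda>t. snd (y t)"
  defines "c \<equiv> \<lambda>t. inner (Amat l1 l2 l3 (x t)) (Amat l1 l2 l3 (x t)) + inner (p t) (p t)"
  shows "((\<lambda>t. inner (x t) (x t) - 1) has_real_derivative 2 * inner (x t) (p t)) (at t)"
    "((\<lambda>t. inner (x t) (p t)) has_real_derivative - c t * (inner (x t) (x t) - 1)) (at t)"
    "continuous_on UNIV c"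
proof -
  have d1: "(x has_vector_derivative p t) (at t)" using traj_vec_derivs(1)[OF assms(1), of t]
    by (simp add: x_def p_def)
  have d2: "(p has_vector_derivative snd (field l1 l2 l3 (y t))) (at t)" using traj_vec_derivs(2)[OF assms(1), of t]
    by (simp add: p_def)
  note d = d1 d2
  have "((\<lambda>t. inner (x t) (x t) - 1) has_real_derivative (inner (x t) (p t) + inner (p t) (x t)) - 0) (at t)"
    by (intro DERIV_diff inner_vderiv d DERIV_const)
  then show "((\<lambda>t. inner (x t) (x t) - 1) has_real_derivative 2 * inner (x t) (p t)) (at t)"
    by (simp add: inner_commute)
  have "((\<lambda>t. inner (x t) (p t)) has_real_derivative inner (x t) (snd (field l1 l2 l3 (y t))) + inner (p t) (p t)) (at t)"
    by (intro inner_vderiv d)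
  moreover have "inner (x t) (snd (field l1 l2 l3 (y t))) + inner (p t) (p t) = - c t * (inner (x t) (x t) - 1)"
    by (simp add: field_eq c_def x_def p_def inner_diff_right inner_AA power2_norm_eq_inner algebra_simps)
  ultimately show "((\<lambda>t. inner (x t) (p t)) has_real_derivative - c t * (inner (x t) (x t) - 1)) (at t)" by simp
  have cy: "continuous_on UNIV y"
    using assms(1) unfolding is_traj_def
    by (intro continuous_at_imp_continuous_on) (auto intro: has_vector_derivative_continuous)
  show "continuous_on UNIV c" unfolding c_def x_def p_def
    by (intro continuous_intros continuous_on_compose2[OF bounded_linear.continuous_on[OF Amat_bl] ] cy) auto
qed

lemma gronwall_zero:
  fixes f g c :: "real \<Rightarrow> real"
  assumes df: "\<And>t. (f has_real_derivative 2 * g t) (at t)"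
    and dg: "\<And>t. (g has_real_derivative - c t * f t) (at t)"
    and cc: "continuous_on UNIV c" and f0: "f 0 = 0" and g0: "g 0 = 0"
  shows "f T = 0 \<and> g T = 0"
proof -
  define h where "h t = f t ^ 2 + g t ^ 2" for t
  obtain M where M: "M \<ge> 0" "\<And>t. t \<in> {-\<bar>T\<bar>..\<bar>T\<bar>} \<Longrightarrow> norm (c t) \<le> M"
    using continuous_on_compact_bound[OF compact_Icc continuous_on_subset[OF cc subset_UNIV]] by blast
  define K where "K = 2 + M"
  have dh: "(h has_real_derivative (4 - 2 * c t) * f t * g t) (at t)" for t
  proof -
    have "(h has_real_derivative 2 * f t * (2 * g t) + 2 * g t * (- c t * f t)) (at t)"
      unfolding h_def[abs_def] by (auto intro!: derivative_eq_intros df dg)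
    then show ?thesis by (simp add: algebra_simps)
  qed
  have hb: "\<bar>(4 - 2 * c t) * f t * g t\<bar> \<le> K * h t" if "t \<in> {-\<bar>T\<bar>..\<bar>T\<bar>}" for t
  proof -
    have ct: "\<bar>c t\<bar> \<le> M" using M(2)[OF that] by simp
    have hfg: "\<bar>f t * g t\<bar> \<le> h t / 2"
      using sum_squares_bound[of "\<bar>f t\<bar>" "\<bar>g t\<bar>"] by (simp add: h_def abs_mult)
    have "\<bar>(4 - 2 * c t) * f t * g t\<bar> = \<bar>4 - 2 * c t\<bar> * \<bar>f t * g t\<bar>" by (simp add: abs_mult)
    also have "\<dots> \<le> (4 + 2 * M) * \<bar>f t * g t\<bar>" using ct by (intro mult_right_mono) auto
    also have "\<dots> \<le> (4 + 2 * M) * (h t / 2)" using M(1) hfg by (intro mult_left_mono) auto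
    finally show ?thesis by (simp add: K_def algebra_simps)
  qed
  have h0: "h 0 = 0" by (simp add: h_def f0 g0)
  have hnn: "h t \<ge> 0" for t by (simp add: h_def)
  have "h T = 0"
  proof (cases "T \<ge> 0")
    case True
    define k where "k t = h t * exp (- K * t)" for t
    have "k T \<le> k 0"
    proof (rule DERIV_nonpos_imp_nonincreasing[OF True])
      fix t assume t: "0 \<le> t" "t \<le> T"
      have "(k has_real_derivative ((4 - 2 * c t) * f t * g t) * exp (- K * t) + h t * (exp (- K * t) * (- K))) (at t)"
        unfolding k_def[abs_def] by (auto intro!: derivative_eq_intros dh)
      moreover have "((4 - 2 * c t) * f t * g t) * exp (- K * t) + h t * (exp (- K * t) * (- K)) \<le> 0"
      proof -
        have "(4 - 2 * c t) * f t * g t \<le> K * h t" using hb[of t] t by auto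
        then have "((4 - 2 * c t) * f t * g t - K * h t) * exp (- K * t) \<le> 0"
          by (intro mult_nonpos_nonneg) auto
        then show ?thesis by (simp add: algebra_simps)
      qed
      ultimately show "\<exists>y. (k has_real_derivative y) (at t) \<and> y \<le> 0" by blast
    qed
    then have "h T * exp (- K * T) \<le> 0" by (simp add: k_def h0)
    then have "h T \<le> 0" by (simp add: mult_le_0_iff)
    then show ?thesis using hnn[of T] by simp
  next
    case False
    then have T: "T \<le> 0" by simp
    define k where "k t = h t * exp (K * t)" for t
    have "k T \<le> k 0"
    proof (rule DERIV_nonneg_imp_nondecreasing[OF T])
      fix t assume t: "T \<le> t" "t \<le> 0"
      have "(k has_real_derivative ((4 - 2 * c t) * f t * g t) * exp (K * t) + h t * (exp (K * t) * K)) (at t)"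
        unfolding k_def[abs_def] by (auto intro!: derivative_eq_intros dh)
      moreover have "((4 - 2 * c t) * f t * g t) * exp (K * t) + h t * (exp (K * t) * K) \<ge> 0"
      proof -
        have "- ((4 - 2 * c t) * f t * g t) \<le> K * h t" using hb[of t] t by auto
        then have "((4 - 2 * c t) * f t * g t + K * h t) * exp (K * t) \<ge> 0"
          by (intro mult_nonneg_nonneg) auto
        then show ?thesis by (simp add: algebra_simps)
      qed
      ultimately show "\<exists>y. (k has_real_derivative y) (at t) \<and> y \<ge> 0" by blast
    qed
    then have "h T * exp (K * T) \<le> 0" by (simp add: k_def h0)
    then have "h T \<le> 0" by (simp add: mult_le_0_iff)
    then show ?thesis using hnn[of T] by simp
  qed
  then show ?thesis unfolding h_def by (simp add: add_nonneg_eq_0_iff)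
qed

lemma traj_TS2:
  assumes "is_traj (field l1 l2 l3) y" "y 0 \<in> TS2"
  shows "y t \<in> TS2"
proof -
  note fg = traj_fg_derivs[OF assms(1)]
  have y0: "inner (fst (y 0)) (fst (y 0)) - 1 = 0" "inner (fst (y 0)) (snd (y 0)) = 0"
    using assms(2) by (cases "y 0", auto simp: TS2_def simp flip: power2_norm_eq_inner)+
  from gronwall_zero[OF fg(1) fg(2) fg(3) y0, of t]
  have "inner (fst (y t)) (fst (y t)) = 1" "inner (fst (y t)) (snd (y t)) = 0" by auto
  then show ?thesis by (cases "y t") (auto simp: TS2_def norm_eq_sqrt_inner)
qed

lemma traj_energy_const:
  assumes "is_traj (field l1 l2 l3) y" "y 0 \<in> TS2"
  shows "energy l1 l2 l3 (y t) = energy l1 l2 l3 (y 0)"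
proof -
  let ?A = "Amat l1 l2 l3"
  have e: "energy l1 l2 l3 (y t) = inner (snd (y t)) (snd (y t)) / 2 - inner (?A (fst (y t))) (?A (fst (y t))) / 2" for t
    by (simp add: energy_eq power2_norm_eq_inner)
  have "((\<lambda>t. energy l1 l2 l3 (y t)) has_real_derivative 0) (at t)" for t
  proof -
    note d = traj_vec_derivs[OF assms(1)]
    have dA: "((\<lambda>t. ?A (fst (y t))) has_vector_derivative ?A (snd (y t))) (at t)"
      by (rule bounded_linear.has_vector_derivative[OF Amat_bl d(1)])
    have "((\<lambda>t. inner (snd (y t)) (snd (y t)) / 2 - inner (?A (fst (y t))) (?A (fst (y t))) / 2) has_real_derivative
        (inner (snd (y t)) (snd (field l1 l2 l3 (y t))) + inner (snd (field l1 l2 l3 (y t))) (snd (y t))) / 2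
       - (inner (?A (fst (y t))) (?A (snd (y t))) + inner (?A (snd (y t))) (?A (fst (y t)))) / 2) (at t)"
      by (auto intro!: DERIV_diff DERIV_cdivide inner_vderiv d dA)
    moreover have "inner (fst (y t)) (snd (y t)) = 0" using traj_TS2[OF assms, of t] by (cases "y t") (auto simp: TS2_def)
    moreover have "inner (snd (y t)) (?A (?A (fst (y t)))) = inner (?A (fst (y t))) (?A (snd (y t)))"
      by (simp add: inner_AA inner_commute)
    ultimately show ?thesis unfolding e[abs_def]
      by (simp add: field_eq inner_diff_right inner_diff_left inner_commute algebra_simps)
  qed
  then show ?thesis by (intro DERIV_isconst_all) auto
qed

lemma energy_tendsto:
  assumes "(y \<longlongrightarrow> q) F"
  shows "((\<lambda>t. energy l1 l2 l3 (y t)) \<longlongrightarrow> energy l1 l2 l3 q) F"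
  unfolding energy_eq
  by (auto intro!: tendsto_intros bounded_linear.tendsto[OF Amat_bl] assms)

lemma stable_sub_level:
  assumes "energy l1 l2 l3 q = energy l1 l2 l3 P"
  shows "stable_set (field l1 l2 l3) TS2 q \<subseteq> energy_level l1 l2 l3 P"
proof
  fix w assume "w \<in> stable_set (field l1 l2 l3) TS2 q"
  then obtain y where y: "w \<in> TS2" "is_traj (field l1 l2 l3) y" "y 0 = w" "(y \<longlongrightarrow> q) at_top"
    by (auto simp: stable_set_def)
  have c: "energy l1 l2 l3 (y t) = energy l1 l2 l3 w" for t using traj_energy_const[OF y(2)] y by auto
  have lim: "((\<lambda>t. energy l1 l2 l3 (y t)) \<longlongrightarrow> energy l1 l2 l3 q) at_top"
    by (rule energy_tendsto[OF y(4)])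
  have "(\<lambda>t. energy l1 l2 l3 (y t)) = (\<lambda>t::real. energy l1 l2 l3 w)" using c by auto
  with lim have "((\<lambda>t::real. energy l1 l2 l3 w) \<longlongrightarrow> energy l1 l2 l3 q) at_top" by simp
  then have "energy l1 l2 l3 w = energy l1 l2 l3 q" by (simp add: tendsto_const_iff)
  then show "w \<in> energy_level l1 l2 l3 P" using y(1) assms by (simp add: energy_level_def)
qed

lemma unstable_sub_level:
  assumes "energy l1 l2 l3 q = energy l1 l2 l3 P"
  shows "unstable_set (field l1 l2 l3) TS2 q \<subseteq> energy_level l1 l2 l3 P"
proof
  fix w assume "w \<in> unstable_set (field l1 l2 l3) TS2 q"
  then obtain y where y: "w \<in> TS2" "is_traj (field l1 l2 l3) y" "y 0 = w" "(y \<longlongrightarrow> q) at_bot"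
    by (auto simp: unstable_set_def)
  have c: "energy l1 l2 l3 (y t) = energy l1 l2 l3 w" for t using traj_energy_const[OF y(2)] y by auto
  have lim: "((\<lambda>t. energy l1 l2 l3 (y t)) \<longlongrightarrow> energy l1 l2 l3 q) at_bot"
    by (rule energy_tendsto[OF y(4)])
  have "(\<lambda>t. energy l1 l2 l3 (y t)) = (\<lambda>t::real. energy l1 l2 l3 w)" using c by auto
  with lim have "((\<lambda>t::real. energy l1 l2 l3 w) \<longlongrightarrow> energy l1 l2 l3 q) at_bot" by simp
  then have "energy l1 l2 l3 w = energy l1 l2 l3 q" by (simp add: tendsto_const_iff)
  then show "w \<in> energy_level l1 l2 l3 P" using y(1) assms by (simp add: energy_level_def)
qed


lemma quot1_deriv:
  assumes "(n has_real_derivative n') (at t)" "(d has_real_derivative d') (at t)" "d t \<noteq> 0"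
  shows "((\<lambda>t. n t / d t) has_real_derivative (n' * d t - n t * d') / (d t)^2) (at t)"
  using DERIV_divide[OF assms] by (simp add: power2_eq_square)

lemma quot2_deriv:
  assumes "(n has_real_derivative n1 t) (at t)" "(n1 has_real_derivative n2) (at t)"
    "(d has_real_derivative d1 t) (at t)" "(d1 has_real_derivative d2) (at t)" "d t \<noteq> 0"
  shows "((\<lambda>t. (n1 t * d t - n t * d1 t) / (d t)^2) has_real_derivative
     ((n2 * d t - n t * d2) * d t - 2 * d1 t * (n1 t * d t - n t * d1 t)) / (d t)^3) (at t)"
proof -
  have "((\<lambda>t. (n1 t * d t - n t * d1 t) / (d t)^2) has_real_derivative
     ((n2 * d t + n1 t * d1 t - (n1 t * d1 t + n t * d2)) * (d t)^2 - (n1 t * d t - n t * d1 t) * (2 * d t * d1 t)) / ((d t)^2 * (d t)^2)) (at t)"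
    using assms by (auto intro!: derivative_eq_intros simp: power2_eq_square)
  moreover have "((n2 * d t + n1 t * d1 t - (n1 t * d1 t + n t * d2)) * (d t)^2 - (n1 t * d t - n t * d1 t) * (2 * d t * d1 t)) / ((d t)^2 * (d t)^2)
     = ((n2 * d t - n t * d2) * d t - 2 * d1 t * (n1 t * d t - n t * d1 t)) / (d t)^3"
    using assms(5) by (simp add: field_simps power2_eq_square power3_eq_cube)
  ultimately show ?thesis by simp
qed

lemma comp_eq:
  fixes n n1 n2 d d1 d2 l U :: real
  assumes "d \<noteq> 0" "n2 * d - 2 * n1 * d1 + n * d2 = l^2 * n * d" "U = 2 * (d2 * d - d1^2) / d^2"
  shows "((n2 * d - n * d2) * d - 2 * d1 * (n1 * d - n * d1)) / d^3 = l * (l * (n / d)) - U * (n / d)"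
proof -
  have num: "(n2 * d - n * d2) * d - 2 * d1 * (n1 * d - n * d1) = l^2*d^2*n - 2*(d2*d - d1^2)*n"
    using assms(2) by algebra
  have "l * (l * (n / d)) - U * (n / d) = (l^2*d^2*n - 2*(d2*d - d1^2)*n) / d^3"
    using assms(1) unfolding assms(3) by (simp add: field_simps power2_eq_square power3_eq_cube)
  then show ?thesis by (simp add: num)
qed

lemma soliton_traj:
  fixes n1 n1' n1'' n2 n2' n2'' n3 n3' n3'' d d' d'' :: "real \<Rightarrow> real"
  assumes dn1: "\<And>t. (n1 has_real_derivative n1' t) (at t)" "\<And>t. (n1' has_real_derivative n1'' t) (at t)"
    and dn2: "\<And>t. (n2 has_real_derivative n2' t) (at t)" "\<And>t. (n2' has_real_derivative n2'' t) (at t)"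
    and dn3: "\<And>t. (n3 has_real_derivative n3' t) (at t)" "\<And>t. (n3' has_real_derivative n3'' t) (at t)"
    and dd: "\<And>t. (d has_real_derivative d' t) (at t)" "\<And>t. (d' has_real_derivative d'' t) (at t)"
    and pos: "\<And>t. d t > 0"
    and bil1: "\<And>t. n1'' t * d t - 2 * n1' t * d' t + n1 t * d'' t = l1^2 * n1 t * d t"
    and bil2: "\<And>t. n2'' t * d t - 2 * n2' t * d' t + n2 t * d'' t = l2^2 * n2 t * d t"
    and bil3: "\<And>t. n3'' t * d t - 2 * n3' t * d' t + n3 t * d'' t = l3^2 * n3 t * d t"
    and sph: "\<And>t. (n1 t)^2 + (n2 t)^2 + (n3 t)^2 = (d t)^2"
    and sph': "\<And>t. n1 t * n1' t + n2 t * n2' t + n3 t * n3' t = d t * d' t"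
    and uid: "\<And>t. 2 * d'' t * d t - (d' t)^2 = l1^2 * (n1 t)^2 + l2^2 * (n2 t)^2 + l3^2 * (n3 t)^2
                 + (n1' t)^2 + (n2' t)^2 + (n3' t)^2"
  defines "y \<equiv> \<lambda>t. (vector [n1 t / d t, n2 t / d t, n3 t / d t] :: real^3,
      vector [(n1' t * d t - n1 t * d' t) / (d t)^2, (n2' t * d t - n2 t * d' t) / (d t)^2,
              (n3' t * d t - n3 t * d' t) / (d t)^2] :: real^3)"
  shows "is_traj (field l1 l2 l3) y" "y t \<in> TS2"
proof -
  have TS: "y t \<in> TS2" for t
  proof -
    have dnz: "d t \<noteq> 0" using pos[of t] by simp
    have "(norm (fst (y t)))^2 = ((n1 t)^2 + (n2 t)^2 + (n3 t)^2) / (d t)^2"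
      by (simp add: y_def norm3_sq power_divide add_divide_distrib)
    then have "(norm (fst (y t)))^2 = 1" using sph[of t] dnz by simp
    then have n1: "norm (fst (y t)) = 1" using norm_ge_zero[of "fst (y t)"] by (auto simp: power2_eq_1_iff)
    have "inner (fst (y t)) (snd (y t)) = (d t * (n1 t * n1' t + n2 t * n2' t + n3 t * n3' t)
        - d' t * ((n1 t)^2 + (n2 t)^2 + (n3 t)^2)) / (d t)^3"
      using dnz by (simp add: y_def inner3 field_simps power2_eq_square power3_eq_cube)
    also have "\<dots> = 0" using sph[of t] sph'[of t] by (simp add: power2_eq_square)
    finally show ?thesis using n1 by (cases "y t") (simp add: TS2_def)
  qed
  then show "y t \<in> TS2" .
  show "is_traj (field l1 l2 l3) y" unfolding is_traj_def
  proof
    fix t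
    have dnz: "d t \<noteq> 0" using pos[of t] by simp
    have der: "(y has_vector_derivative
       (vector [(n1' t * d t - n1 t * d' t) / (d t)^2, (n2' t * d t - n2 t * d' t) / (d t)^2,
              (n3' t * d t - n3 t * d' t) / (d t)^2],
        vector [((n1'' t * d t - n1 t * d'' t) * d t - 2 * d' t * (n1' t * d t - n1 t * d' t)) / (d t)^3,
                ((n2'' t * d t - n2 t * d'' t) * d t - 2 * d' t * (n2' t * d t - n2 t * d' t)) / (d t)^3,
                ((n3'' t * d t - n3 t * d'' t) * d t - 2 * d' t * (n3' t * d t - n3 t * d' t)) / (d t)^3])) (at t)"
      unfolding y_def
      by (intro has_vector_derivative_Pair vec3_deriv quot1_deriv quot2_deriv dn1 dn2 dn3 dd dnz)
    define U where "U = (norm (Amat l1 l2 l3 (fst (y t))))^2 + (norm (snd (y t)))^2"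
    have U: "U = 2 * (d'' t * d t - (d' t)^2) / (d t)^2"
    proof -
      have sq: "((n1' t * d t - n1 t * d' t))^2 + ((n2' t * d t - n2 t * d' t))^2 + ((n3' t * d t - n3 t * d' t))^2
          = (d t)^2 * ((n1' t)^2 + (n2' t)^2 + (n3' t)^2 - (d' t)^2)"
        using sph[of t] sph'[of t] by algebra
      have "U = (l1^2 * (n1 t)^2 + l2^2 * (n2 t)^2 + l3^2 * (n3 t)^2) / (d t)^2
          + (((n1' t * d t - n1 t * d' t))^2 + ((n2' t * d t - n2 t * d' t))^2 + ((n3' t * d t - n3 t * d' t))^2) / ((d t)^2)^2"
        by (simp add: U_def y_def norm3_sq power_divide power_mult_distrib add_divide_distrib)
      also have "\<dots> = (l1^2 * (n1 t)^2 + l2^2 * (n2 t)^2 + l3^2 * (n3 t)^2 + (n1' t)^2 + (n2' t)^2 + (n3' t)^2 - (d' t)^2) / (d t)^2"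
        unfolding sq using dnz by (simp add: field_simps power2_eq_square)
      also have "\<dots> = 2 * (d'' t * d t - (d' t)^2) / (d t)^2"
        using uid[of t] by (simp add: algebra_simps)
      finally show ?thesis .
    qed
    have fy: "field l1 l2 l3 (y t) = (snd (y t), vector [l1 * (l1 * (n1 t / d t)) - U * (n1 t / d t),
        l2 * (l2 * (n2 t / d t)) - U * (n2 t / d t), l3 * (l3 * (n3 t / d t)) - U * (n3 t / d t)])"
      by (simp add: field_eq U_def vec_eq_iff forall_3 algebra_simps) (simp add: y_def)
    show "(y has_vector_derivative field l1 l2 l3 (y t)) (at t)"
      unfolding fy
      using der comp_eq[OF dnz bil1[of t] U] comp_eq[OF dnz bil2[of t] U] comp_eq[OF dnz bil3[of t] U]
      by (simp add: y_def)
  qed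
qed


definition bet :: "real \<Rightarrow> real \<Rightarrow> real" where "bet l1 l2 = (l2 - l1) / (l1 + l2)"

definition "pD k1 k2 b m X Y = Y^2 + X^2*Y^2 + m^2*b^2 + m^2*X^2"
definition "pD1 k1 k2 b m X Y = 2*k2*Y^2 + 2*(k1+k2)*X^2*Y^2 + 2*k1*m^2*X^2"
definition "pD2 k1 k2 b m X Y = 4*k2^2*Y^2 + 4*(k1+k2)^2*X^2*Y^2 + 4*k1^2*m^2*X^2"
definition "pA k1 k2 b m X Y = 2*X*Y^2 - 2*b*m^2*X"
definition "pA1 k1 k2 b m X Y = 2*(k1+2*k2)*X*Y^2 - 2*b*m^2*k1*X"
definition "pA2 k1 k2 b m X Y = 2*(k1+2*k2)^2*X*Y^2 - 2*b*m^2*k1^2*X"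
definition "pB k1 k2 b m X Y = 2*m*b*Y + 2*m*X^2*Y"
definition "pB1 k1 k2 b m X Y = 2*m*b*k2*Y + 2*m*(2*k1+k2)*X^2*Y"
definition "pB2 k1 k2 b m X Y = 2*m*b*k2^2*Y + 2*m*(2*k1+k2)^2*X^2*Y"
definition "pC k1 k2 b m X Y = X^2*Y^2 - Y^2 + m^2*b^2 - m^2*X^2"
definition "pC1 k1 k2 b m X Y = 2*(k1+k2)*X^2*Y^2 - 2*k2*Y^2 - 2*k1*m^2*X^2"
definition "pC2 k1 k2 b m X Y = 4*(k1+k2)^2*X^2*Y^2 - 4*k2^2*Y^2 - 4*k1^2*m^2*X^2"

lemmas pdefs = pD_def pD1_def pD2_def pA_def pA1_def pA2_def pB_def pB1_def pB2_def pC_def pC1_def pC2_def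

definition famXY :: "real \<Rightarrow> real \<Rightarrow> real \<Rightarrow> real \<Rightarrow> real \<Rightarrow> real \<Rightarrow> state" where
  "famXY k1 k2 b m X Y = (vector [pA k1 k2 b m X Y / pD k1 k2 b m X Y, pB k1 k2 b m X Y / pD k1 k2 b m X Y,
        pC k1 k2 b m X Y / pD k1 k2 b m X Y],
     vector [(pA1 k1 k2 b m X Y * pD k1 k2 b m X Y - pA k1 k2 b m X Y * pD1 k1 k2 b m X Y) / (pD k1 k2 b m X Y)^2,
             (pB1 k1 k2 b m X Y * pD k1 k2 b m X Y - pB k1 k2 b m X Y * pD1 k1 k2 b m X Y) / (pD k1 k2 b m X Y)^2,
             (pC1 k1 k2 b m X Y * pD k1 k2 b m X Y - pC k1 k2 b m X Y * pD1 k1 k2 b m X Y) / (pD k1 k2 b m X Y)^2])"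

definition "fam l1 l2 m t = famXY l1 l2 (bet l1 l2) m (exp (l1*t)) (exp (l2*t))"

context
  fixes k1 k2 b c m X Y :: real
  assumes k: "k1 = c*(1-b)" "k2 = c*(1+b)"
begin

lemma id_bilA: "pA2 k1 k2 b m X Y * pD k1 k2 b m X Y - 2 * pA1 k1 k2 b m X Y * pD1 k1 k2 b m X Y
   + pA k1 k2 b m X Y * pD2 k1 k2 b m X Y = k1^2 * pA k1 k2 b m X Y * pD k1 k2 b m X Y"
  unfolding pdefs k by algebra

lemma id_bilB: "pB2 k1 k2 b m X Y * pD k1 k2 b m X Y - 2 * pB1 k1 k2 b m X Y * pD1 k1 k2 b m X Y
   + pB k1 k2 b m X Y * pD2 k1 k2 b m X Y = k2^2 * pB k1 k2 b m X Y * pD k1 k2 b m X Y"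
  unfolding pdefs k by algebra

lemma id_bilC: "pC2 k1 k2 b m X Y * pD k1 k2 b m X Y - 2 * pC1 k1 k2 b m X Y * pD1 k1 k2 b m X Y
   + pC k1 k2 b m X Y * pD2 k1 k2 b m X Y = 0^2 * pC k1 k2 b m X Y * pD k1 k2 b m X Y"
  unfolding pdefs k by (simp add: algebra_simps power2_eq_square)

lemma id_sph: "(pA k1 k2 b m X Y)^2 + (pB k1 k2 b m X Y)^2 + (pC k1 k2 b m X Y)^2 = (pD k1 k2 b m X Y)^2"
  unfolding pdefs by algebra

lemma id_sph': "pA k1 k2 b m X Y * pA1 k1 k2 b m X Y + pB k1 k2 b m X Y * pB1 k1 k2 b m X Y
   + pC k1 k2 b m X Y * pC1 k1 k2 b m X Y = pD k1 k2 b m X Y * pD1 k1 k2 b m X Y"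
  unfolding pdefs by (simp add: algebra_simps power2_eq_square)

lemma id_uid: "2 * pD2 k1 k2 b m X Y * pD k1 k2 b m X Y - (pD1 k1 k2 b m X Y)^2
   = k1^2 * (pA k1 k2 b m X Y)^2 + k2^2 * (pB k1 k2 b m X Y)^2 + 0^2 * (pC k1 k2 b m X Y)^2
   + (pA1 k1 k2 b m X Y)^2 + (pB1 k1 k2 b m X Y)^2 + (pC1 k1 k2 b m X Y)^2"
  unfolding pdefs k by (simp add: algebra_simps power2_eq_square)

end

lemma bet_rel:
  assumes "l1 + l2 > 0"
  shows "l1 = (l1+l2)/2 * (1 - bet l1 l2)" "l2 = (l1+l2)/2 * (1 + bet l1 l2)"
  using assms by (simp_all add: bet_def field_simps)

context fixes l1 l2 b m :: real begin

lemma dE: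
  "((\<lambda>t. pD l1 l2 b m (exp (l1*t)) (exp (l2*t))) has_real_derivative pD1 l1 l2 b m (exp (l1*t)) (exp (l2*t))) (at t)"
  "((\<lambda>t. pD1 l1 l2 b m (exp (l1*t)) (exp (l2*t))) has_real_derivative pD2 l1 l2 b m (exp (l1*t)) (exp (l2*t))) (at t)"
  "((\<lambda>t. pA l1 l2 b m (exp (l1*t)) (exp (l2*t))) has_real_derivative pA1 l1 l2 b m (exp (l1*t)) (exp (l2*t))) (at t)"
  "((\<lambda>t. pA1 l1 l2 b m (exp (l1*t)) (exp (l2*t))) has_real_derivative pA2 l1 l2 b m (exp (l1*t)) (exp (l2*t))) (at t)"
  "((\<lambda>t. pB l1 l2 b m (exp (l1*t)) (exp (l2*t))) has_real_derivative pB1 l1 l2 b m (exp (l1*t)) (exp (l2*t))) (at t)"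
  "((\<lambda>t. pB1 l1 l2 b m (exp (l1*t)) (exp (l2*t))) has_real_derivative pB2 l1 l2 b m (exp (l1*t)) (exp (l2*t))) (at t)"
  "((\<lambda>t. pC l1 l2 b m (exp (l1*t)) (exp (l2*t))) has_real_derivative pC1 l1 l2 b m (exp (l1*t)) (exp (l2*t))) (at t)"
  "((\<lambda>t. pC1 l1 l2 b m (exp (l1*t)) (exp (l2*t))) has_real_derivative pC2 l1 l2 b m (exp (l1*t)) (exp (l2*t))) (at t)"
  unfolding pdefs by (auto intro!: derivative_eq_intros simp: algebra_simps power2_eq_square)

end

lemma pD_pos: "Y > 0 \<Longrightarrow> pD k1 k2 b m X Y > (0::real)"
proof -
  assume "Y > 0"
  then have "0 < Y^2" by simp
  moreover have "0 \<le> X^2*Y^2" "0 \<le> m^2*b^2" "0 \<le> m^2*X^2" by simp_all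
  ultimately show ?thesis unfolding pD_def by linarith
qed

lemma fam_traj:
  assumes "0 < l1" "0 < l2"
  shows "is_traj (field l1 l2 0) (fam l1 l2 m)" "fam l1 l2 m t \<in> TS2"
proof -
  let ?b = "bet l1 l2"
  let ?c = "(l1+l2)/2"
  have k: "l1 = ?c*(1 - ?b)" "l2 = ?c*(1 + ?b)" using bet_rel[of l1 l2] assms by auto
  have pos: "\<And>t. pD l1 l2 ?b m (exp (l1*t)) (exp (l2*t)) > 0" by (rule pD_pos) simp
  note S = soliton_traj[of "\<lambda>t. pA l1 l2 ?b m (exp (l1*t)) (exp (l2*t))" "\<lambda>t. pA1 l1 l2 ?b m (exp (l1*t)) (exp (l2*t))"
      "\<lambda>t. pA2 l1 l2 ?b m (exp (l1*t)) (exp (l2*t))"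
      "\<lambda>t. pB l1 l2 ?b m (exp (l1*t)) (exp (l2*t))" "\<lambda>t. pB1 l1 l2 ?b m (exp (l1*t)) (exp (l2*t))"
      "\<lambda>t. pB2 l1 l2 ?b m (exp (l1*t)) (exp (l2*t))"
      "\<lambda>t. pC l1 l2 ?b m (exp (l1*t)) (exp (l2*t))" "\<lambda>t. pC1 l1 l2 ?b m (exp (l1*t)) (exp (l2*t))"
      "\<lambda>t. pC2 l1 l2 ?b m (exp (l1*t)) (exp (l2*t))"
      "\<lambda>t. pD l1 l2 ?b m (exp (l1*t)) (exp (l2*t))" "\<lambda>t. pD1 l1 l2 ?b m (exp (l1*t)) (exp (l2*t))"
      "\<lambda>t. pD2 l1 l2 ?b m (exp (l1*t)) (exp (l2*t))" l1 l2 0,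
      OF dE(3,4,5,6,7,8,1,2) pos id_bilA[OF k] id_bilB[OF k] id_bilC[OF k] id_sph[OF k] id_sph'[OF k] id_uid[OF k]]
  have eq: "fam l1 l2 m = (\<lambda>t. (vector [pA l1 l2 ?b m (exp (l1*t)) (exp (l2*t)) / pD l1 l2 ?b m (exp (l1*t)) (exp (l2*t)),
        pB l1 l2 ?b m (exp (l1*t)) (exp (l2*t)) / pD l1 l2 ?b m (exp (l1*t)) (exp (l2*t)),
        pC l1 l2 ?b m (exp (l1*t)) (exp (l2*t)) / pD l1 l2 ?b m (exp (l1*t)) (exp (l2*t))],
     vector [(pA1 l1 l2 ?b m (exp (l1*t)) (exp (l2*t)) * pD l1 l2 ?b m (exp (l1*t)) (exp (l2*t)) - pA l1 l2 ?b m (exp (l1*t)) (exp (l2*t)) * pD1 l1 l2 ?b m (exp (l1*t)) (exp (l2*t))) / (pD l1 l2 ?b m (exp (l1*t)) (exp (l2*t)))^2,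
             (pB1 l1 l2 ?b m (exp (l1*t)) (exp (l2*t)) * pD l1 l2 ?b m (exp (l1*t)) (exp (l2*t)) - pB l1 l2 ?b m (exp (l1*t)) (exp (l2*t)) * pD1 l1 l2 ?b m (exp (l1*t)) (exp (l2*t))) / (pD l1 l2 ?b m (exp (l1*t)) (exp (l2*t)))^2,
             (pC1 l1 l2 ?b m (exp (l1*t)) (exp (l2*t)) * pD l1 l2 ?b m (exp (l1*t)) (exp (l2*t)) - pC l1 l2 ?b m (exp (l1*t)) (exp (l2*t)) * pD1 l1 l2 ?b m (exp (l1*t)) (exp (l2*t))) / (pD l1 l2 ?b m (exp (l1*t)) (exp (l2*t)))^2]))"
    by (simp add: fam_def famXY_def fun_eq_iff)
  show "is_traj (field l1 l2 0) (fam l1 l2 m)" unfolding eq by (rule S(1))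
  show "fam l1 l2 m t \<in> TS2" using S(2)[of t] unfolding eq by auto
qed


lemma vec3_tendsto:
  assumes "(f1 \<longlongrightarrow> a1) F" "(f2 \<longlongrightarrow> a2) F" "(f3 \<longlongrightarrow> a3) F"
  shows "((\<lambda>t. vector [f1 t, f2 t, f3 t] :: real^3) \<longlongrightarrow> vector [a1, a2, a3]) F"
  unfolding vec3_axis by (intro tendsto_intros assms)

definition "tD k1 k2 b m a c = a^2 + 1 + m^2*b^2*a^2*c^2 + m^2*c^2"
definition "tD1 k1 k2 b m a c = 2*k2*a^2 + 2*(k1+k2) + 2*k1*m^2*c^2"
definition "tA k1 k2 b m a c = 2*a - 2*b*m^2*a*c^2"
definition "tA1 k1 k2 b m a c = 2*(k1+2*k2)*a - 2*b*m^2*k1*a*c^2"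
definition "tB k1 k2 b m a c = 2*m*b*a^2*c + 2*m*c"
definition "tB1 k1 k2 b m a c = 2*m*b*k2*a^2*c + 2*m*(2*k1+k2)*c"
definition "tC k1 k2 b m a c = 1 - a^2 + m^2*b^2*a^2*c^2 - m^2*c^2"
definition "tC1 k1 k2 b m a c = 2*(k1+k2) - 2*k2*a^2 - 2*k1*m^2*c^2"
lemmas tdefs = tD_def tD1_def tA_def tA1_def tB_def tB1_def tC_def tC1_def

definition famT :: "real \<Rightarrow> real \<Rightarrow> real \<Rightarrow> real \<Rightarrow> real \<Rightarrow> real \<Rightarrow> state" where
  "famT k1 k2 b m a c = (vector [tA k1 k2 b m a c / tD k1 k2 b m a c, tB k1 k2 b m a c / tD k1 k2 b m a c,
        tC k1 k2 b m a c / tD k1 k2 b m a c],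
     vector [(tA1 k1 k2 b m a c * tD k1 k2 b m a c - tA k1 k2 b m a c * tD1 k1 k2 b m a c) / (tD k1 k2 b m a c)^2,
             (tB1 k1 k2 b m a c * tD k1 k2 b m a c - tB k1 k2 b m a c * tD1 k1 k2 b m a c) / (tD k1 k2 b m a c)^2,
             (tC1 k1 k2 b m a c * tD k1 k2 b m a c - tC k1 k2 b m a c * tD1 k1 k2 b m a c) / (tD k1 k2 b m a c)^2])"

context
  fixes k1 k2 b m X Y a c :: real
  assumes ha: "X * a = 1" and hc: "Y * c = 1"
begin
lemma scale_all:
  "pD k1 k2 b m X Y * (a^2*c^2) = tD k1 k2 b m a c"
  "pD1 k1 k2 b m X Y * (a^2*c^2) = tD1 k1 k2 b m a c"
  "pA k1 k2 b m X Y * (a^2*c^2) = tA k1 k2 b m a c"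
  "pA1 k1 k2 b m X Y * (a^2*c^2) = tA1 k1 k2 b m a c"
  "pB k1 k2 b m X Y * (a^2*c^2) = tB k1 k2 b m a c"
  "pB1 k1 k2 b m X Y * (a^2*c^2) = tB1 k1 k2 b m a c"
  "pC k1 k2 b m X Y * (a^2*c^2) = tC k1 k2 b m a c"
  "pC1 k1 k2 b m X Y * (a^2*c^2) = tC1 k1 k2 b m a c"
  unfolding pdefs tdefs using ha hc by algebra+
end

lemma q_scale: "w \<noteq> 0 \<Longrightarrow> (n * w) / (d * (w::real)) = n / d"
  by simp

lemma q_scale2: "w \<noteq> 0 \<Longrightarrow> ((n1 * w) * (d * w) - (n * w) * (d1 * w)) / (d * (w::real))^2 = (n1 * d - n * d1) / d^2"
  by (cases "d = 0") (simp_all add: field_simps power2_eq_square)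

lemma famXY_famT:
  assumes "X * a = 1" "Y * c = 1"
  shows "famXY k1 k2 b m X Y = famT k1 k2 b m a c"
proof -
  have w: "a^2*c^2 \<noteq> 0" using assms by auto
  note s = scale_all[OF assms, of k1 k2 b m]
  show ?thesis unfolding famXY_def famT_def s[symmetric]
    by (simp only: q_scale[OF w] q_scale2[OF w])
qed

lemma exp_neg_lim: "0 < (l::real) \<Longrightarrow> ((\<lambda>t. exp (- l * t)) \<longlongrightarrow> 0) at_top"
proof -
  assume l: "0 < l"
  have "LIM t at_top. (- l) * t :> at_bot"
    by (rule filterlim_tendsto_neg_mult_at_bot[OF tendsto_const _ filterlim_ident]) (use l in simp)
  then show ?thesis by (rule filterlim_compose[OF exp_at_bot])
qed

lemma famT_lim:
  assumes "(a \<longlongrightarrow> 0) F" "(c \<longlongrightarrow> 0) F"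
  shows "((\<lambda>t. famT k1 k2 b m (a t) (c t)) \<longlongrightarrow> (vector [0,0,1], 0)) F"
proof -
  have "((\<lambda>t. famT k1 k2 b m (a t) (c t)) \<longlongrightarrow> famT k1 k2 b m 0 0) F"
    unfolding famT_def tdefs
    by (intro tendsto_Pair vec3_tendsto tendsto_intros assms) simp_all
  moreover have "famT k1 k2 b m 0 0 = (vector [0,0,1], 0)"
    by (simp add: famT_def tdefs vec_eq_iff forall_3 zero_prod_def)
  ultimately show ?thesis by simp
qed

lemma fam_lim:
  assumes "0 < l1" "0 < l2"
  shows "(fam l1 l2 m \<longlongrightarrow> (vector [0,0,1], 0)) at_top"
proof -
  have "fam l1 l2 m t = famT l1 l2 (bet l1 l2) m (exp (- l1 * t)) (exp (- l2 * t))" for t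
    unfolding fam_def by (rule famXY_famT) (simp_all add: exp_minus_inverse[symmetric] exp_add[symmetric])
  then have "fam l1 l2 m = (\<lambda>t. famT l1 l2 (bet l1 l2) m (exp (- l1 * t)) (exp (- l2 * t)))" by auto
  then show ?thesis using famT_lim[OF exp_neg_lim[OF assms(1)] exp_neg_lim[OF assms(2)]] by simp
qed

subsection \<open>Shifts and the reflection symmetry\<close>

lemma traj_shift:
  assumes "is_traj F y"
  shows "is_traj F (\<lambda>t. y (s + t))"
  unfolding is_traj_def
proof
  fix t
  have d1: "((\<lambda>t. s + t) has_vector_derivative 1) (at t)" by (auto intro!: derivative_eq_intros)
  have d2: "(y has_vector_derivative F (y (s + t))) (at (s + t))" using assms is_traj_def by auto
  from vector_diff_chain_at[OF d1 d2] show "((\<lambda>t. y (s + t)) has_vector_derivative F (y (s + t))) (at t)"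
    by (simp add: o_def)
qed

lemma lim_shift_top: "(y \<longlongrightarrow> q) at_top \<Longrightarrow> ((\<lambda>t. y ((s::real) + t)) \<longlongrightarrow> q) at_top"
proof -
  assume a: "(y \<longlongrightarrow> q) at_top"
  have "LIM t at_top. s + t :> at_top"
    by (rule filterlim_tendsto_add_at_top[OF tendsto_const filterlim_ident])
  then show ?thesis by (rule filterlim_compose[OF a])
qed

lemma lim_shift_bot: "(y \<longlongrightarrow> q) at_bot \<Longrightarrow> ((\<lambda>t. y ((s::real) + t)) \<longlongrightarrow> q) at_bot"
proof -
  assume a: "(y \<longlongrightarrow> q) at_bot"
  have "LIM t at_bot. s + t :> at_bot"
    using filterlim_tendsto_add_at_bot_iff[OF tendsto_const[of s], of "\<lambda>t. t" at_bot] filterlim_ident by auto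
  then show ?thesis by (rule filterlim_compose[OF a])
qed

definition Rm :: "state \<Rightarrow> state" where
  "Rm z = (vector [fst z $ 1, fst z $ 2, - (fst z $ 3)], vector [- (snd z $ 1), - (snd z $ 2), snd z $ 3])"

lemma Rm_linear: "linear Rm"
  by (rule linearI) (simp_all add: Rm_def vec_eq_iff forall_3 algebra_simps)

lemma Rm_bl: "bounded_linear Rm"
  using Rm_linear linear_conv_bounded_linear by blast

lemma norm_Rm0: "norm (fst (Rm z)) = norm (fst z)"
proof (rule power2_eq_imp_eq)
  show "(norm (fst (Rm z)))^2 = (norm (fst z))^2" by (simp add: norm3_sq Rm_def)
qed simp_all

lemma norm_Rm1: "norm (Amat l1 l2 l3 (fst (Rm z))) = norm (Amat l1 l2 l3 (fst z))"
proof (rule power2_eq_imp_eq)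
  show "(norm (Amat l1 l2 l3 (fst (Rm z))))^2 = (norm (Amat l1 l2 l3 (fst z)))^2" by (simp add: norm3_sq Rm_def)
qed simp_all

lemma norm_Rm2: "norm (snd (Rm z)) = norm (snd z)"
proof (rule power2_eq_imp_eq)
  show "(norm (snd (Rm z)))^2 = (norm (snd z))^2" by (simp add: norm3_sq Rm_def)
qed simp_all

lemma Rm_field0: "field l1 l2 l3 (Rm (x,p)) = - Rm (field l1 l2 l3 (x,p))"
proof -
  let ?x = "vector [x$1, x$2, -(x$3)] :: real^3" and ?p = "vector [-(p$1), -(p$2), p$3] :: real^3"
  let ?a = "(norm (Amat l1 l2 l3 x))^2" and ?b = "(norm p)^2"
  have Rw: "Rm (x,p) = (?x, ?p)" by (simp add: Rm_def)
  have n1: "norm (Amat l1 l2 l3 ?x) = norm (Amat l1 l2 l3 x)" using norm_Rm1[of l1 l2 l3 "(x,p)"] Rw by simp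
  have n2: "norm ?p = norm p" using norm_Rm2[of "(x,p)"] Rw by simp
  have "field l1 l2 l3 (Rm (x,p)) = (?p, Amat l1 l2 l3 (Amat l1 l2 l3 ?x) - ?a *\<^sub>R ?x - ?b *\<^sub>R ?x)"
    by (simp only: Rw field_def prod.case n1 n2)
  also have "\<dots> = - Rm (field l1 l2 l3 (x,p))"
    unfolding field_def prod.case Rm_def fst_conv snd_conv
    by (simp add: prod_eq_iff vec_eq_iff forall_3)
  finally show ?thesis .
qed

lemma Rm_field: "field l1 l2 l3 (Rm w) = - Rm (field l1 l2 l3 w)"
  by (cases w) (simp only: Rm_field0)

lemma traj_R:
  assumes "is_traj (field l1 l2 l3) y"
  shows "is_traj (field l1 l2 l3) (\<lambda>t. Rm (y (- t)))"
  unfolding is_traj_def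
proof
  fix t
  have d1: "((\<lambda>t. - t) has_vector_derivative -1) (at t)" by (auto intro!: derivative_eq_intros)
  have d2: "(y has_vector_derivative field l1 l2 l3 (y (- t))) (at (- t))" using assms is_traj_def by auto
  from vector_diff_chain_at[OF d1 d2] have "((\<lambda>t. y (- t)) has_vector_derivative - field l1 l2 l3 (y (- t))) (at t)"
    by (simp add: o_def)
  from bounded_linear.has_vector_derivative[OF Rm_bl this]
  show "((\<lambda>t. Rm (y (- t))) has_vector_derivative field l1 l2 l3 (Rm (y (- t)))) (at t)"
    by (simp add: Rm_field linear_neg[OF Rm_linear])
qed

lemma Rm_TS2: "z \<in> TS2 \<Longrightarrow> Rm z \<in> TS2"
proof -
  assume z: "z \<in> TS2"
  have "inner (fst (Rm z)) (snd (Rm z)) = - inner (fst z) (snd z)" by (simp add: Rm_def inner3)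
  then show ?thesis using z norm_Rm0[of z] by (cases z, cases "Rm z") (simp add: TS2_def)
qed

lemma Rm_P': "Rm (vector [0,0,1], 0) = (vector [0,0,-1], 0)"
  by (simp add: Rm_def vec_eq_iff forall_3)

lemma fam_stable:
  assumes "0 < l1" "0 < l2"
  shows "fam l1 l2 m s \<in> stable_set (field l1 l2 0) TS2 (vector [0,0,1], 0)"
proof -
  have a1: "fam l1 l2 m s \<in> TS2" by (rule fam_traj(2)[OF assms])
  have a2: "is_traj (field l1 l2 0) (\<lambda>t. fam l1 l2 m (s + t))" by (rule traj_shift[OF fam_traj(1)[OF assms]])
  have a3: "((\<lambda>t. fam l1 l2 m (s + t)) \<longlongrightarrow> (vector [0,0,1], 0)) at_top" by (rule lim_shift_top[OF fam_lim[OF assms]])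
  have a4: "(\<lambda>t. fam l1 l2 m (s + t)) 0 = fam l1 l2 m s" by simp
  have "\<exists>y. is_traj (field l1 l2 0) y \<and> y 0 = fam l1 l2 m s \<and> (y \<longlongrightarrow> (vector [0,0,1], 0)) at_top"
    by (intro exI[of _ "\<lambda>t. fam l1 l2 m (s + t)"] conjI a2 a3 a4)
  then show ?thesis unfolding stable_set_def mem_Collect_eq using a1 by blast
qed

lemma fam_unstable:
  assumes "0 < l1" "0 < l2"
  shows "Rm (fam l1 l2 m (- s)) \<in> unstable_set (field l1 l2 0) TS2 (vector [0,0,-1], 0)"
proof -
  let ?g = "\<lambda>t. Rm (fam l1 l2 m (- t))"
  have tg: "is_traj (field l1 l2 0) ?g" by (rule traj_R[OF fam_traj(1)[OF assms]])
  have "((\<lambda>t. fam l1 l2 m (- t)) \<longlongrightarrow> (vector [0,0,1], 0)) at_bot"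
    by (rule filterlim_compose[OF fam_lim[OF assms] filterlim_uminus_at_top_at_bot])
  from bounded_linear.tendsto[OF Rm_bl this]
  have lg: "(?g \<longlongrightarrow> (vector [0,0,-1], 0)) at_bot" by (simp add: Rm_P')
  have a1: "Rm (fam l1 l2 m (- s)) \<in> TS2" by (rule Rm_TS2[OF fam_traj(2)[OF assms]])
  have a2: "is_traj (field l1 l2 0) (\<lambda>t. ?g (s + t))" by (rule traj_shift[OF tg])
  have a3: "((\<lambda>t. ?g (s + t)) \<longlongrightarrow> (vector [0,0,-1], 0)) at_bot" by (rule lim_shift_bot[OF lg])
  have a4: "(\<lambda>t. ?g (s + t)) 0 = Rm (fam l1 l2 m (- s))" by simp
  have "\<exists>y. is_traj (field l1 l2 0) y \<and> y 0 = Rm (fam l1 l2 m (- s)) \<and> (y \<longlongrightarrow> (vector [0,0,-1], 0)) at_bot"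
    by (intro exI[of _ "\<lambda>t. ?g (s + t)"] conjI a2 a3 a4)
  then show ?thesis unfolding unstable_set_def mem_Collect_eq using a1 by blast
qed


lemma qq_deriv:
  assumes "(n has_real_derivative n') (at x)" "(n1 has_real_derivative n1') (at x)"
    "(d has_real_derivative d') (at x)" "(d1 has_real_derivative d1') (at x)" "d x \<noteq> 0"
  shows "((\<lambda>m. (n1 m * d m - n m * d1 m) / (d m)^2) has_real_derivative
    ((n1' * d x + d' * n1 x - (n' * d1 x + d1' * n x)) * (d x)^2 - (n1 x * d x - n x * d1 x) * (2 * (d' * d x))) / ((d x)^2 * (d x)^2)) (at x)"
  using DERIV_divide[OF DERIV_diff[OF DERIV_mult[OF assms(2) assms(3)] DERIV_mult[OF assms(1) assms(4)]]
     DERIV_power[OF assms(3), of 2]] assms(5) by simp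

lemma qq0_deriv:
  assumes "(n has_real_derivative n') (at x)" "(n1 has_real_derivative n1') (at x)"
    "(d has_real_derivative 0) (at x)" "(d1 has_real_derivative d1') (at x)" "d x \<noteq> 0"
    "n x = 0" "n1 x = 0"
  shows "((\<lambda>m. (n1 m * d m - n m * d1 m) / (d m)^2) has_real_derivative
    (n1' * d x - n' * d1 x) / (d x)^2) (at x)"
  by (rule DERIV_cong[OF qq_deriv[OF assms(1-5)]]) (use assms(5-7) in \<open>simp add: field_simps power2_eq_square\<close>)

context fixes k1 k2 b X Y :: real begin
lemma poly_dm:
  "((\<lambda>m. pD k1 k2 b m X Y) has_real_derivative 0) (at 0)"
  "((\<lambda>m. pD1 k1 k2 b m X Y) has_real_derivative 0) (at 0)"
  "((\<lambda>m. pA k1 k2 b m X Y) has_real_derivative 0) (at 0)"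
  "((\<lambda>m. pA1 k1 k2 b m X Y) has_real_derivative 0) (at 0)"
  "((\<lambda>m. pB k1 k2 b m X Y) has_real_derivative 2*b*Y + 2*X^2*Y) (at 0)"
  "((\<lambda>m. pB1 k1 k2 b m X Y) has_real_derivative 2*b*k2*Y + 2*(2*k1+k2)*X^2*Y) (at 0)"
  "((\<lambda>m. pC k1 k2 b m X Y) has_real_derivative 0) (at 0)"
  "((\<lambda>m. pC1 k1 k2 b m X Y) has_real_derivative 0) (at 0)"
  unfolding pdefs by (auto intro!: derivative_eq_intros)
end

lemma famXY_dm:
  assumes "Y > 0"
  shows "((\<lambda>m. famXY k1 k2 b m X Y) has_vector_derivative
   (vector [0, (2*b*Y + 2*X^2*Y) / (Y^2 + X^2*Y^2), 0],
    vector [0, ((2*b*k2*Y + 2*(2*k1+k2)*X^2*Y) * (Y^2 + X^2*Y^2) - (2*b*Y + 2*X^2*Y) * (2*k2*Y^2 + 2*(k1+k2)*X^2*Y^2)) / (Y^2 + X^2*Y^2)^2, 0])) (at 0)"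
proof -
  have p: "Y^2 + X^2*Y^2 > 0" using assms by (simp add: add_pos_nonneg)
  have d0: "pD k1 k2 b 0 X Y = Y^2 + X^2*Y^2" by (simp add: pD_def)
  have nz: "pD k1 k2 b 0 X Y \<noteq> 0" using p d0 by simp
  have v0: "pB k1 k2 b 0 X Y = 0" "pB1 k1 k2 b 0 X Y = 0" "pD1 k1 k2 b 0 X Y = 2*k2*Y^2 + 2*(k1+k2)*X^2*Y^2"
    by (simp_all add: pdefs)
  note dm = poly_dm[of k1 k2 b X Y]
  have c1: "((\<lambda>m. pA k1 k2 b m X Y / pD k1 k2 b m X Y) has_real_derivative 0) (at 0)"
    by (rule DERIV_cong[OF quot1_deriv[OF dm(3) dm(1) nz]]) simp
  have c2: "((\<lambda>m. pB k1 k2 b m X Y / pD k1 k2 b m X Y) has_real_derivative (2*b*Y + 2*X^2*Y) / (Y^2 + X^2*Y^2)) (at 0)"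
    by (rule DERIV_cong[OF quot1_deriv[OF dm(5) dm(1) nz]]) (use p in \<open>simp add: d0 v0 power2_eq_square\<close>)
  have c3: "((\<lambda>m. pC k1 k2 b m X Y / pD k1 k2 b m X Y) has_real_derivative 0) (at 0)"
    by (rule DERIV_cong[OF quot1_deriv[OF dm(7) dm(1) nz]]) simp
  have c4: "((\<lambda>m. (pA1 k1 k2 b m X Y * pD k1 k2 b m X Y - pA k1 k2 b m X Y * pD1 k1 k2 b m X Y) / (pD k1 k2 b m X Y)^2) has_real_derivative 0) (at 0)"
    by (rule DERIV_cong[OF qq_deriv[OF dm(3) dm(4) dm(1) dm(2) nz]]) simp
  have c5: "((\<lambda>m. (pB1 k1 k2 b m X Y * pD k1 k2 b m X Y - pB k1 k2 b m X Y * pD1 k1 k2 b m X Y) / (pD k1 k2 b m X Y)^2) has_real_derivative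
     ((2*b*k2*Y + 2*(2*k1+k2)*X^2*Y) * (Y^2 + X^2*Y^2) - (2*b*Y + 2*X^2*Y) * (2*k2*Y^2 + 2*(k1+k2)*X^2*Y^2)) / (Y^2 + X^2*Y^2)^2) (at 0)"
    using qq0_deriv[OF dm(5) dm(6) dm(1) dm(2) nz v0(1,2)] by (simp add: d0 v0)
  have c6: "((\<lambda>m. (pC1 k1 k2 b m X Y * pD k1 k2 b m X Y - pC k1 k2 b m X Y * pD1 k1 k2 b m X Y) / (pD k1 k2 b m X Y)^2) has_real_derivative 0) (at 0)"
    by (rule DERIV_cong[OF qq_deriv[OF dm(7) dm(8) dm(1) dm(2) nz]]) simp
  show ?thesis unfolding famXY_def
    by (intro has_vector_derivative_Pair vec3_deriv c1 c2 c3 c4 c5 c6)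
qed

lemma fam0:
  assumes "Y > 0"
  shows "famXY k1 k2 b 0 X Y = (vector [2*X/(1+X^2), 0, (X^2-1)/(1+X^2)],
      vector [2*k1*X*(1-X^2)/(1+X^2)^2, 0, 4*k1*X^2/(1+X^2)^2])"
proof -
  have p: "1+X^2 > 0" by (simp add: add_pos_nonneg)
  have Y2: "Y^2 > 0" using assms by simp
  have e: "pD k1 k2 b 0 X Y = Y^2 * (1+X^2)" "pD1 k1 k2 b 0 X Y = Y^2 * (2*k2 + 2*(k1+k2)*X^2)"
    "pA k1 k2 b 0 X Y = Y^2 * (2*X)" "pA1 k1 k2 b 0 X Y = Y^2 * (2*(k1+2*k2)*X)"
    "pB k1 k2 b 0 X Y = 0" "pB1 k1 k2 b 0 X Y = 0"
    "pC k1 k2 b 0 X Y = Y^2 * (X^2 - 1)" "pC1 k1 k2 b 0 X Y = Y^2 * (2*(k1+k2)*X^2 - 2*k2)"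
    by (simp_all add: pdefs algebra_simps)
  have q1: "(Y^2 * n) / (Y^2 * d) = n / d" for n d :: real using Y2 by simp
  have q2: "((Y^2 * n1) * (Y^2 * d) - (Y^2 * n) * (Y^2 * d1)) / (Y^2 * d)^2 = (n1 * d - n * d1) / d^2" for n1 d n d1 :: real
  proof -
    have e1: "((Y^2 * n1) * (Y^2 * d) - (Y^2 * n) * (Y^2 * d1)) = (Y^2*Y^2) * (n1*d - n*d1)" by (simp add: algebra_simps)
    have e2: "(Y^2*d)^2 = (Y^2*Y^2) * d^2" by (simp add: power2_eq_square)
    have "Y^2*Y^2 \<noteq> 0" using Y2 by simp
    then show ?thesis unfolding e1 e2 by (rule mult_divide_mult_cancel_left)
  qed
  have r1: "((2*(k1+2*k2)*X) * (1+X^2) - (2*X) * (2*k2 + 2*(k1+k2)*X^2)) / (1+X^2)^2 = 2*k1*X*(1-X^2)/(1+X^2)^2"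
    by (simp add: algebra_simps)
  have r3: "((2*(k1+k2)*X^2 - 2*k2) * (1+X^2) - (X^2 - 1) * (2*k2 + 2*(k1+k2)*X^2)) / (1+X^2)^2 = 4*k1*X^2/(1+X^2)^2"
    by (simp add: algebra_simps)
  show ?thesis unfolding famXY_def e q1 q2 r1 r3 using p
    by (simp add: vec_eq_iff forall_3)
qed

lemma fr: "b \<noteq> 0 \<Longrightarrow> d \<noteq> 0 \<Longrightarrow> a * d = c * b \<Longrightarrow> a / b = c / (d::real)"
  by (simp add: frac_eq_eq)

lemma fam0_sym:
  assumes "X > 0" "Y > 0" "X * X' = 1" "Y * Y' = 1"
  shows "Rm (famXY k1 k2 b 0 X' Y') = famXY k1 k2 b 0 X Y"
proof -
  have p: "1+X^2 > 0" "1+X'^2 > 0" by (simp_all add: add_pos_nonneg)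
  have p2: "(1+X^2)^2 \<noteq> 0" "(1+X'^2)^2 \<noteq> 0" using p by simp_all
  have Y': "Y' > 0" using assms(2,4) zero_less_mult_iff[of Y Y'] by auto
  have a: "2*X'/(1+X'^2) = 2*X/(1+X^2)"
    by (rule fr) (use p assms(3) in \<open>auto, algebra\<close>)
  have b: "- ((X'^2-1)/(1+X'^2)) = (X^2-1)/(1+X^2)"
    unfolding minus_divide_left by (rule fr) (use p assms(3) in \<open>auto, algebra\<close>)
  have c: "- (2*k1*X'*(1-X'^2)/(1+X'^2)^2) = 2*k1*X*(1-X^2)/(1+X^2)^2"
    unfolding minus_divide_left by (rule fr[OF p2(2) p2(1)]) (use assms(3) in algebra)
  have d: "4*k1*X'^2/(1+X'^2)^2 = 4*k1*X^2/(1+X^2)^2"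
    by (rule fr[OF p2(2) p2(1)]) (use assms(3) in algebra)
  show ?thesis unfolding fam0[OF Y'] fam0[OF assms(2)]
    by (simp add: Rm_def vec_eq_iff forall_3 a b c d)
qed


lemma decomp:
  fixes l1 l2 x1 x3 a b c d :: real
  assumes l1: "l1 > 0" and x1: "x1 > 0" and sph: "x1^2 + x3^2 = 1" and det: "a*d - b*c \<noteq> 0"
  defines "z \<equiv> (vector [x1, 0, x3], vector [- l1*x1*x3, 0, l1*x1^2]) :: state"
  assumes C1: "inner (fst z) (fst w) = 0"
    and C2: "inner (fst w) (snd z) + inner (fst z) (snd w) = 0"
    and C3: "inner (snd z) (snd w) = inner (Amat l1 l2 0 (fst z)) (Amat l1 l2 0 (fst w))"
  shows "\<exists>\<alpha> \<beta> \<gamma>. w = \<alpha> *\<^sub>R field l1 l2 0 z + \<beta> *\<^sub>R (vector [0,a,0], vector [0,b,0])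
            + \<gamma> *\<^sub>R (vector [0,c,0], vector [0,d,0])"
proof -
  obtain u v where w: "w = (u,v)" by (cases w)
  have c1: "x1 * u$1 + x3 * u$3 = 0" using C1 by (simp add: z_def w inner3)
  have c2: "u$1 * (- l1*x1*x3) + u$3 * (l1*x1^2) + x1 * v$1 + x3 * v$3 = 0" using C2 by (simp add: z_def w inner3)
  have c3: "(- l1*x1*x3) * v$1 + (l1*x1^2) * v$3 = (l1*x1) * (l1 * u$1)" using C3 by (simp add: z_def w inner3)
  define R where "R = x1 * u$3 - x3 * u$1"
  have pz: "(norm (snd z))^2 = l1^2 * x1^2"
  proof -
    have "(norm (snd z))^2 = l1^2 * x1^2 * (x1^2 + x3^2)" unfolding z_def snd_conv norm3_sq by (simp add: algebra_simps power2_eq_square)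
    then show ?thesis using sph by simp
  qed
  have az: "(norm (Amat l1 l2 0 (fst z)))^2 = l1^2 * x1^2" unfolding z_def fst_conv norm3_sq by (simp add: power_mult_distrib)
  have fz: "field l1 l2 0 z = (vector [- l1*x1*x3, 0, l1*x1^2], vector [l1^2*x1 - 2*l1^2*x1^3, 0, - 2*l1^2*x1^2*x3])"
    unfolding field_eq pz az by (simp add: z_def vec_eq_iff forall_3 algebra_simps power2_eq_square power3_eq_cube)
  have nz: "l1 * x1 \<noteq> 0" using l1 x1 by simp
  have e1: "u$1 = - x3 * R" unfolding R_def using c1 sph by algebra
  have e3: "u$3 = x1 * R" unfolding R_def using c1 sph by algebra
  have "l1 * x1 * (v$1 - l1 * R * (1 - 2*x1^2)) = 0" unfolding R_def using c1 c2 c3 sph by algebra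
  then have e4: "v$1 = l1 * R * (1 - 2*x1^2)" using nz by simp
  have "l1 * x1 * (v$3 + 2 * l1 * x1 * x3 * R) = 0" unfolding R_def using c1 c2 c3 sph by algebra
  then have e6: "v$3 = - 2 * l1 * x1 * x3 * R" using nz by simp
  define \<alpha> where "\<alpha> = R / (l1 * x1)"
  define \<beta> where "\<beta> = (u$2 * d - v$2 * c) / (a*d - b*c)"
  define \<gamma> where "\<gamma> = (a * v$2 - b * u$2) / (a*d - b*c)"
  have e2: "u$2 = \<beta> * a + \<gamma> * c"
  proof -
    have "\<beta> * a + \<gamma> * c = ((u$2 * d - v$2 * c) * a + (a * v$2 - b * u$2) * c) / (a*d - b*c)"
      unfolding \<beta>_def \<gamma>_def by (simp add: add_divide_distrib)
    also have "\<dots> = u$2 * (a*d - b*c) / (a*d - b*c)" by (simp add: algebra_simps)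
    also have "\<dots> = u$2" using det by simp
    finally show ?thesis by simp
  qed
  have e5: "v$2 = \<beta> * b + \<gamma> * d"
  proof -
    have "\<beta> * b + \<gamma> * d = ((u$2 * d - v$2 * c) * b + (a * v$2 - b * u$2) * d) / (a*d - b*c)"
      unfolding \<beta>_def \<gamma>_def by (simp add: add_divide_distrib)
    also have "\<dots> = v$2 * (a*d - b*c) / (a*d - b*c)" by (simp add: algebra_simps)
    also have "\<dots> = v$2" using det by simp
    finally show ?thesis by simp
  qed
  have a1: "\<alpha> * (- l1*x1*x3) = u$1" unfolding \<alpha>_def e1 using nz by (simp add: field_simps)
  have a3: "\<alpha> * (l1*x1^2) = u$3" unfolding \<alpha>_def e3 using nz by (simp add: field_simps power2_eq_square)
  have a4: "\<alpha> * (l1^2*x1 - 2*l1^2*x1^3) = v$1" unfolding \<alpha>_def e4 using nz by (simp add: field_simps power2_eq_square power3_eq_cube)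
  have a6: "\<alpha> * (- 2*l1^2*x1^2*x3) = v$3" unfolding \<alpha>_def e6 using nz by (simp add: field_simps power2_eq_square)
  have "w = \<alpha> *\<^sub>R field l1 l2 0 z + \<beta> *\<^sub>R (vector [0,a,0], vector [0,b,0]) + \<gamma> *\<^sub>R (vector [0,c,0], vector [0,d,0])"
    unfolding fz w using a1 a3 a4 a6 e2 e5 by (simp add: vec_eq_iff forall_3 algebra_simps)
  then show ?thesis by blast
qed


lemma traj_stable:
  assumes "is_traj F y" "y \<tau> \<in> M" "(y \<longlongrightarrow> q) at_top"
  shows "y \<tau> \<in> stable_set F M q"
proof -
  have "\<exists>y'. is_traj F y' \<and> y' 0 = y \<tau> \<and> (y' \<longlongrightarrow> q) at_top"
    by (intro exI[of _ "\<lambda>t. y (\<tau> + t)"] conjI traj_shift[OF assms(1)] lim_shift_top[OF assms(3)]) simp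
  then show ?thesis unfolding stable_set_def mem_Collect_eq using assms(2) by blast
qed

lemma traj_unstable:
  assumes "is_traj F y" "y \<tau> \<in> M" "(y \<longlongrightarrow> q) at_bot"
  shows "y \<tau> \<in> unstable_set F M q"
proof -
  have "\<exists>y'. is_traj F y' \<and> y' 0 = y \<tau> \<and> (y' \<longlongrightarrow> q) at_bot"
    by (intro exI[of _ "\<lambda>t. y (\<tau> + t)"] conjI traj_shift[OF assms(1)] lim_shift_bot[OF assms(3)]) simp
  then show ?thesis unfolding unstable_set_def mem_Collect_eq using assms(2) by blast
qed

lemma energy_pole: "energy l1 l2 0 (vector [0,0,s], 0) = 0"
  by (simp add: energy_eq norm3_sq)

lemma on_gamma:
  assumes l: "0 < l1" and y: "is_traj (field l1 l2 0) y"
    and yy: "\<forall>t. y t \<in> TS2 \<and> fst (y t) $ 2 = 0 \<and> fst (y t) $ 1 > 0"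
    and top: "(y \<longlongrightarrow> (vector [0,0,1], 0)) at_top"
  shows "\<exists>x1 x3. x1 > 0 \<and> x1^2 + x3^2 = 1 \<and> y t = (vector [x1,0,x3], vector [- l1*x1*x3, 0, l1*x1^2])"
proof -
  let ?P' = "(vector [0,0,1], 0) :: state"
  let ?x = "\<lambda>\<tau> i. fst (y \<tau>) $ i" and ?p = "\<lambda>\<tau> i. snd (y \<tau>) $ i"
  have en: "energy l1 l2 0 (y \<tau>) = 0" for \<tau>
  proof -
    have "y \<tau> \<in> stable_set (field l1 l2 0) TS2 ?P'" using traj_stable[OF y _ top] yy by blast
    with stable_sub_level[of l1 l2 0 ?P' ?P'] have "y \<tau> \<in> energy_level l1 l2 0 ?P'" by blast
    then show ?thesis by (simp add: energy_level_def energy_pole)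
  qed
  have p2: "?p \<tau> 2 = 0" for \<tau>
  proof -
    have d: "((\<lambda>t. ?x t 2) has_real_derivative ?p \<tau> 2) (at \<tau>)"
      using traj_comp(1)[OF y, of 2 \<tau>] by (simp add: field_eq)
    have "(\<lambda>t. ?x t 2) = (\<lambda>t. 0)" using yy by auto
    with d have "((\<lambda>t. 0::real) has_real_derivative ?p \<tau> 2) (at \<tau>)" by simp
    then show ?thesis using DERIV_const DERIV_unique by blast
  qed
  have facts: "?x \<tau> 1 > 0 \<and> (?x \<tau> 1)^2 + (?x \<tau> 3)^2 = 1 \<and> ?x \<tau> 1 * ?p \<tau> 1 + ?x \<tau> 3 * ?p \<tau> 3 = 0
      \<and> (?p \<tau> 1)^2 + (?p \<tau> 3)^2 = l1^2 * (?x \<tau> 1)^2" for \<tau>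
  proof -
    have yT: "y \<tau> \<in> TS2" using yy by blast
    have T: "norm (fst (y \<tau>)) = 1" "inner (fst (y \<tau>)) (snd (y \<tau>)) = 0" using yT
      by (simp_all add: TS2_def case_prod_beta)
    have x2: "?x \<tau> 2 = 0" using yy by auto
    have "(norm (fst (y \<tau>)))^2 = 1" using T by simp
    then have s: "(?x \<tau> 1)^2 + (?x \<tau> 3)^2 = 1" by (simp add: norm3_sq x2)
    have i: "?x \<tau> 1 * ?p \<tau> 1 + ?x \<tau> 3 * ?p \<tau> 3 = 0" using T(2) by (simp add: inner3 x2)
    have "(norm (snd (y \<tau>)))^2 = (norm (Amat l1 l2 0 (fst (y \<tau>))))^2" using en[of \<tau>] by (simp add: energy_eq)
    then have e: "(?p \<tau> 1)^2 + (?p \<tau> 3)^2 = l1^2 * (?x \<tau> 1)^2"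
      by (simp add: norm3_sq p2 x2 power_mult_distrib)
    show ?thesis using s i e yy by auto
  qed
  define R where "R \<tau> = ?x \<tau> 1 * ?p \<tau> 3 - ?x \<tau> 3 * ?p \<tau> 1" for \<tau>
  have pR: "?p \<tau> 3 = ?x \<tau> 1 * R \<tau>" "?p \<tau> 1 = - ?x \<tau> 3 * R \<tau>" for \<tau>
    using facts[of \<tau>] unfolding R_def by algebra+
  have R2: "(R \<tau>)^2 = l1^2 * (?x \<tau> 1)^2" for \<tau>
  proof -
    have "(R \<tau>)^2 = ((?x \<tau> 1)^2 + (?x \<tau> 3)^2) * ((?p \<tau> 1)^2 + (?p \<tau> 3)^2) - (?x \<tau> 1 * ?p \<tau> 1 + ?x \<tau> 3 * ?p \<tau> 3)^2"
      unfolding R_def by algebra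
    then show ?thesis using facts[of \<tau>] by simp
  qed
  have p3nz: "?p \<tau> 3 \<noteq> 0" for \<tau>
  proof
    assume "?p \<tau> 3 = 0"
    then have "R \<tau> = 0" using pR(1)[of \<tau>] facts[of \<tau>] by simp
    then show False using R2[of \<tau>] facts[of \<tau>] l by simp
  qed
  have dx3: "((\<lambda>t. ?x t 3) has_real_derivative ?p \<tau> 3) (at \<tau>)" for \<tau>
    using traj_comp(1)[OF y, of 3 \<tau>] by (simp add: field_eq)
  have cp3: "isCont (\<lambda>t. ?p t 3) \<tau>" for \<tau>
    using traj_comp(2)[OF y, of 3 \<tau>] by (rule DERIV_isCont)
  have pos: "?p t 3 > 0"
  proof (rule ccontr)
    assume "\<not> ?p t 3 > 0"
    then have neg: "?p t 3 < 0" using p3nz[of t] by linarith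
    have allneg: "?p \<tau> 3 < 0" if "t \<le> \<tau>" for \<tau>
    proof (rule ccontr)
      assume "\<not> ?p \<tau> 3 < 0"
      then have "?p t 3 \<le> 0" "0 \<le> ?p \<tau> 3" using neg by auto
      from IVT[of "\<lambda>s. ?p s 3" t 0 \<tau>, OF this that] cp3
      obtain s where "?p s 3 = 0" by blast
      then show False using p3nz by blast
    qed
    have dec: "?x T 3 < ?x t 3" if "t < T" for T
      by (rule DERIV_neg_imp_decreasing[OF that]) (use dx3 allneg in auto)
    have lim: "((\<lambda>T. ?x T 3) \<longlongrightarrow> 1) at_top"
      using tendsto_vec_nth[OF tendsto_fst[OF top], of 3] by simp
    have "eventually (\<lambda>T. ?x T 3 \<le> ?x t 3) at_top"
      using eventually_gt_at_top[of t] by eventually_elim (auto dest: dec intro: less_imp_le)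
    then have "1 \<le> ?x t 3" using tendsto_le[OF _ tendsto_const lim] by simp
    moreover have "(?x t 3)^2 < 1"
    proof -
      have a: "0 < (?x t 1)^2" using facts[of t] by simp
      show ?thesis using a facts[of t] by linarith
    qed
    ultimately show False by (smt (verit) one_le_power)
  qed
  have Rpos: "R t > 0" using pos pR(1)[of t] facts[of t] by (simp add: zero_less_mult_iff)
  have Rl: "R t = l1 * ?x t 1"
    using R2[of t] Rpos facts[of t] l by (metis power2_eq_imp_eq less_eq_real_def mult_pos_pos power_mult_distrib)
  have "y t = (vector [?x t 1, 0, ?x t 3], vector [- l1 * ?x t 1 * ?x t 3, 0, l1 * (?x t 1)^2])"
  proof -
    have "fst (y t) = vector [?x t 1, 0, ?x t 3]" using yy by (simp add: vec_eq_iff forall_3)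
    moreover have "snd (y t) = vector [- l1 * ?x t 1 * ?x t 3, 0, l1 * (?x t 1)^2]"
      using pR[of t] p2[of t] Rl by (simp add: vec_eq_iff forall_3 power2_eq_square)
    ultimately show ?thesis by (cases "y t") simp
  qed
  then show ?thesis using facts[of t] by blast
qed

lemma gamma_point:
  assumes l: "0 < l1" "0 < l2" and x1: "x1 > 0" and sph: "x1^2 + x3^2 = 1"
  shows "\<exists>s. fam l1 l2 0 s = (vector [x1,0,x3], vector [- l1*x1*x3, 0, l1*x1^2])"
proof -
  have x3: "x3^2 < 1" using sph x1 by (smt (verit) zero_less_power)
  then have x3': "1 + x3 > 0" by (simp add: power2_less_1_iff)
  define X where "X = (1 + x3) / x1"
  have Xp: "X > 0" unfolding X_def using x3' x1 by simp
  define s where "s = ln X / l1"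
  have eX: "exp (l1 * s) = X" unfolding s_def using l Xp by simp
  have hX: "X * x1 = 1 + x3" unfolding X_def using x1 by simp
  have p: "1 + X^2 > 0" by (simp add: add_pos_nonneg)
  have "x1 * (x1 * (1 + X^2) - 2*X) = 0" using hX sph by algebra
  then have "x1 * (1 + X^2) - 2*X = 0" using x1 by simp
  then have e1: "x1 = 2*X/(1+X^2)" using p by (simp add: eq_divide_eq)
  have "x1^2 * (x3 * (1 + X^2) - (X^2 - 1)) = 0" using hX sph by algebra
  then have "x3 * (1 + X^2) - (X^2 - 1) = 0" using x1 by simp
  then have e3: "x3 = (X^2-1)/(1+X^2)" using p by (simp add: eq_divide_eq)
  have f: "fam l1 l2 0 s = (vector [2*X/(1+X^2), 0, (X^2-1)/(1+X^2)],
      vector [2*l1*X*(1-X^2)/(1+X^2)^2, 0, 4*l1*X^2/(1+X^2)^2])"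
    unfolding fam_def eX by (rule fam0) simp
  have q1: "2*l1*X*(1-X^2)/(1+X^2)^2 = - l1*x1*x3"
  proof -
    have "- l1 * x1 * x3 = (- l1 * (2*X) * (X^2-1)) / ((1+X^2)^2)" unfolding e1 e3 by (simp add: power2_eq_square)
    also have "\<dots> = 2*l1*X*(1-X^2)/(1+X^2)^2" by (simp add: algebra_simps)
    finally show ?thesis by simp
  qed
  have q3: "4*l1*X^2/(1+X^2)^2 = l1*x1^2" unfolding e1 using p by (simp add: field_simps power2_eq_square)
  show ?thesis using f q1 q3 e1[symmetric] e3[symmetric] by auto
qed

definition "dmA b X Y = 2*b*Y + 2*X^2*Y"
definition "dmD X Y = Y^2 + X^2*Y^2"
definition "dmB k1 k2 b X Y = (2*b*k2*Y + 2*(2*k1+k2)*X^2*Y) * (Y^2 + X^2*Y^2) - (2*b*Y + 2*X^2*Y) * (2*k2*Y^2 + 2*(k1+k2)*X^2*Y^2)"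

lemma det_id:
  fixes k1 k2 b c X Y X' Y' :: real
  assumes k: "k1 = c*(1-b)" "k2 = c*(1+b)" and h: "X * X' = 1" "Y * Y' = 1"
  shows "dmA b X Y * dmB k1 k2 b X' Y' * dmD X Y + dmB k1 k2 b X Y * dmA b X' Y' * dmD X' Y'
    = - 8 * c * b * (1+b) * (1+X^2)^4 * X'^4"
  unfolding dmA_def dmB_def dmD_def k using h by algebra

lemma det_nz:
  fixes k1 k2 b c X Y X' Y' :: real
  assumes k: "k1 = c*(1-b)" "k2 = c*(1+b)" and h: "X * X' = 1" "Y * Y' = 1"
    and pos: "c > 0" "b > 0" "Y > 0" "Y' > 0"
  shows "(dmA b X Y / dmD X Y) * (- (dmB k1 k2 b X' Y' / (dmD X' Y')^2)) - (dmB k1 k2 b X Y / (dmD X Y)^2) * (dmA b X' Y' / dmD X' Y') \<noteq> 0"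
proof -
  have D: "dmD X Y > 0" "dmD X' Y' > 0" using pos unfolding dmD_def by (simp_all add: add_pos_nonneg)
  have X': "X' \<noteq> 0" using h by auto
  have "(dmA b X Y / dmD X Y) * (- (dmB k1 k2 b X' Y' / (dmD X' Y')^2)) - (dmB k1 k2 b X Y / (dmD X Y)^2) * (dmA b X' Y' / dmD X' Y')
     = - (dmA b X Y * dmB k1 k2 b X' Y' * dmD X Y + dmB k1 k2 b X Y * dmA b X' Y' * dmD X' Y') / ((dmD X Y)^2 * (dmD X' Y')^2)"
    using D by (simp add: field_simps power2_eq_square)
  also have "\<dots> = 8 * c * b * (1+b) * (1+X^2)^4 * X'^4 / ((dmD X Y)^2 * (dmD X' Y')^2)"
    unfolding det_id[OF k h] by simp
  also have "\<dots> \<noteq> 0"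
  proof -
    have "1 + X^2 > 0" by (simp add: add_pos_nonneg)
    then show ?thesis using D pos X' by simp
  qed
  finally show ?thesis .
qed


lemma tc_mono: "S \<subseteq> T \<Longrightarrow> tangent_cone S z \<subseteq> tangent_cone T z"
  unfolding tangent_cone_def by blast

lemma traj_tc:
  assumes "is_traj F y" "\<And>h. y (t + h) \<in> S"
  shows "F (y t) \<in> tangent_cone S (y t)"
proof -
  have d1: "((\<lambda>h. t + h) has_vector_derivative 1) (at 0)" by (auto intro!: derivative_eq_intros)
  have d2: "(y has_vector_derivative F (y (t + 0))) (at (t + 0))" using assms(1) is_traj_def by auto
  from vector_diff_chain_at[OF d1 d2] have "((\<lambda>h. y (t + h)) has_vector_derivative F (y t)) (at 0)"
    by (simp add: o_def)
  from tc_deriv[OF this, of S] assms(2) show ?thesis by simp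
qed

lemma subspace_V:
  "subspace {w::state. inner (fst z) (fst w) = 0 \<and> inner (fst w) (snd z) + inner (fst z) (snd w) = 0 \<and>
      inner (snd z) (snd w) = inner (Amat l1 l2 l3 (fst z)) (Amat l1 l2 l3 (fst w))}"
  unfolding subspace_def
  by (simp add: inner_add_right inner_add_left linear_add[OF Amat_linear] linear_scale[OF Amat_linear]
      linear_0[OF Amat_linear] distrib_left[symmetric])

lemma fam_sym0:
  "Rm (fam l1 l2 0 (- t)) = fam l1 l2 0 t"
  unfolding fam_def by (rule fam0_sym) (simp_all add: exp_add[symmetric])

theorem proposition5:
  fixes l1 l2 l3 :: real
  assumes "l2 > l1" and "l1 > l3" and "l3 = 0"
  defines "P \<equiv> (vector [0, 0, -1] :: real^3, 0 :: real^3)"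
      and "P' \<equiv> (vector [0, 0, 1] :: real^3, 0 :: real^3)"
      and "F \<equiv> field l1 l2 l3"
  shows "hyperbolic_equilibrium F TS2 P \<and> hyperbolic_equilibrium F TS2 P' \<and>
    (\<exists>y. is_traj F y \<and> (\<forall>t. y t \<in> TS2 \<and> fst (y t) $ 2 = 0 \<and> fst (y t) $ 1 > 0) \<and>
         (y \<longlongrightarrow> P) at_bot \<and> (y \<longlongrightarrow> P') at_top) \<and>
    (\<forall>y. is_traj F y \<and> (\<forall>t. y t \<in> TS2 \<and> fst (y t) $ 2 = 0 \<and> fst (y t) $ 1 > 0) \<and>
         (y \<longlongrightarrow> P) at_bot \<and> (y \<longlongrightarrow> P') at_top \<longrightarrow>
       (\<forall>t. transversal_at (stable_set F TS2 P') (unstable_set F TS2 P)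
               (energy_level l1 l2 l3 P) (y t)))"
proof -
  have l1: "0 < l1" and l2: "0 < l2" using assms by auto
  note l3 = assms(3)
  let ?F = "field l1 l2 0"
  let ?P = "(vector [0, 0, -1] :: real^3, 0 :: real^3)"
  let ?P' = "(vector [0, 0, 1] :: real^3, 0 :: real^3)"
  have H1: "hyperbolic_equilibrium ?F TS2 ?P" using hyp_pole[OF l1 l2 refl, of "-1"] by simp
  have H2: "hyperbolic_equilibrium ?F TS2 ?P'" using hyp_pole[OF l1 l2 refl, of 1] by simp
  have EX: "\<exists>y. is_traj ?F y \<and> (\<forall>t. y t \<in> TS2 \<and> fst (y t) $ 2 = 0 \<and> fst (y t) $ 1 > 0) \<and>
         (y \<longlongrightarrow> ?P) at_bot \<and> (y \<longlongrightarrow> ?P') at_top"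
  proof (intro exI[of _ "fam l1 l2 0"] conjI allI)
    show "is_traj ?F (fam l1 l2 0)" by (rule fam_traj(1)[OF l1 l2])
    fix t
    show "fam l1 l2 0 t \<in> TS2" by (rule fam_traj(2)[OF l1 l2])
    have f: "fam l1 l2 0 t = (vector [2*exp (l1*t)/(1+(exp (l1*t))^2), 0, ((exp (l1*t))^2-1)/(1+(exp (l1*t))^2)],
      vector [2*l1*exp (l1*t)*(1-(exp (l1*t))^2)/(1+(exp (l1*t))^2)^2, 0, 4*l1*(exp (l1*t))^2/(1+(exp (l1*t))^2)^2])"
      unfolding fam_def by (rule fam0) simp
    show "fst (fam l1 l2 0 t) $ 2 = 0" by (simp add: f)
    have "1 + (exp (l1*t))^2 > 0" by (simp add: add_pos_nonneg)
    then show "fst (fam l1 l2 0 t) $ 1 > 0" by (simp add: f)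
  next
    show "(fam l1 l2 0 \<longlongrightarrow> ?P') at_top" by (rule fam_lim[OF l1 l2])
    have "((\<lambda>t. fam l1 l2 0 (- t)) \<longlongrightarrow> ?P') at_bot"
      by (rule filterlim_compose[OF fam_lim[OF l1 l2] filterlim_uminus_at_top_at_bot])
    from bounded_linear.tendsto[OF Rm_bl this]
    have "((\<lambda>t. Rm (fam l1 l2 0 (- t))) \<longlongrightarrow> ?P) at_bot" by (simp add: Rm_P')
    then show "(fam l1 l2 0 \<longlongrightarrow> ?P) at_bot" by (simp add: fam_sym0)
  qed
  have TR: "transversal_at (stable_set ?F TS2 ?P') (unstable_set ?F TS2 ?P) (energy_level l1 l2 0 ?P) (y t)"
    if y: "is_traj ?F y" and yy: "\<forall>t. y t \<in> TS2 \<and> fst (y t) $ 2 = 0 \<and> fst (y t) $ 1 > 0"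
      and bot: "(y \<longlongrightarrow> ?P) at_bot" and top: "(y \<longlongrightarrow> ?P') at_top" for y t
  proof -
    let ?W1 = "stable_set ?F TS2 ?P'" and ?W2 = "unstable_set ?F TS2 ?P" and ?E = "energy_level l1 l2 0 ?P"
    let ?z = "y t"
    let ?A = "Amat l1 l2 0"
    have yT: "y \<tau> \<in> TS2" for \<tau> using yy by blast
    have zW1: "?z \<in> ?W1" by (rule traj_stable[OF y yT top])
    have zW2: "?z \<in> ?W2" by (rule traj_unstable[OF y yT bot])
    have W1E: "?W1 \<subseteq> ?E" by (rule stable_sub_level) (simp add: energy_pole)
    have W2E: "?W2 \<subseteq> ?E" by (rule unstable_sub_level) (simp add: energy_pole)
    have zE: "?z \<in> ?E" using zW1 W1E by blast
    have ET: "?E \<subseteq> TS2" by (auto simp: energy_level_def)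
    have sub1: "{a + b |a b. a \<in> span (tangent_cone ?W1 ?z) \<and> b \<in> span (tangent_cone ?W2 ?z)} \<subseteq> span (tangent_cone ?E ?z)"
    proof
      fix x assume "x \<in> {a + b |a b. a \<in> span (tangent_cone ?W1 ?z) \<and> b \<in> span (tangent_cone ?W2 ?z)}"
      then obtain a b where x: "x = a + b" and a: "a \<in> span (tangent_cone ?W1 ?z)" and b: "b \<in> span (tangent_cone ?W2 ?z)"
        by blast
      have "a \<in> span (tangent_cone ?E ?z)" using a span_mono[OF tc_mono[OF W1E]] by blast
      moreover have "b \<in> span (tangent_cone ?E ?z)" using b span_mono[OF tc_mono[OF W2E]] by blast
      ultimately show "x \<in> span (tangent_cone ?E ?z)" unfolding x by (rule span_add)
    qed
    have sub2: "span (tangent_cone ?E ?z) \<subseteq> {a + b |a b. a \<in> span (tangent_cone ?W1 ?z) \<and> b \<in> span (tangent_cone ?W2 ?z)}"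
    proof
      fix w assume w: "w \<in> span (tangent_cone ?E ?z)"
      define V where "V = {w::state. inner (fst ?z) (fst w) = 0 \<and> inner (fst w) (snd ?z) + inner (fst ?z) (snd w) = 0 \<and>
          inner (snd ?z) (snd w) = inner (?A (fst ?z)) (?A (fst w))}"
      have EV: "tangent_cone ?E ?z \<subseteq> V"
      proof
        fix v assume v: "v \<in> tangent_cone ?E ?z"
        have e: "\<forall>w\<in>?E. energy l1 l2 0 w = energy l1 l2 0 ?P" by (simp add: energy_level_def)
        have ez: "energy l1 l2 0 ?z = energy l1 l2 0 ?P" using zE by (simp add: energy_level_def)
        show "v \<in> V" unfolding V_def using tc_TS2[OF v ET yT] tc_energy[OF v e ez] by simp
      qed
      have wV: "w \<in> V" using w span_minimal[OF EV] subspace_V unfolding V_def by blast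
      obtain x1 x3 where g: "x1 > 0" "x1^2 + x3^2 = 1"
        and zg: "?z = (vector [x1,0,x3], vector [- l1*x1*x3, 0, l1*x1^2])"
        using on_gamma[OF l1 y yy top, of t] by blast
      obtain s where s: "fam l1 l2 0 s = ?z" using gamma_point[OF l1 l2 g] zg by metis
      define X where "X = exp (l1 * s)"
      define Y where "Y = exp (l2 * s)"
      define X' where "X' = exp (l1 * (- s))"
      define Y' where "Y' = exp (l2 * (- s))"
      define b where "b = bet l1 l2"
      have XX: "X * X' = 1" "Y * Y' = 1" unfolding X_def X'_def Y_def Y'_def by (simp_all add: exp_add[symmetric])
      have pos: "X > 0" "Y > 0" "Y' > 0" unfolding X_def Y_def Y'_def by simp_all
      have bpos: "b > 0" unfolding b_def bet_def using assms l1 by simp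
      have k: "l1 = (l1+l2)/2 * (1 - b)" "l2 = (l1+l2)/2 * (1 + b)" unfolding b_def using bet_rel[of l1 l2] l1 l2 by auto
      define vs :: state where "vs = (vector [0, dmA b X Y / dmD X Y, 0], vector [0, dmB l1 l2 b X Y / (dmD X Y)^2, 0])"
      define vs' :: state where "vs' = (vector [0, dmA b X' Y' / dmD X' Y', 0], vector [0, dmB l1 l2 b X' Y' / (dmD X' Y')^2, 0])"
      have Rvs': "Rm vs' = (vector [0, dmA b X' Y' / dmD X' Y', 0], vector [0, - (dmB l1 l2 b X' Y' / (dmD X' Y')^2), 0])"
        by (simp add: Rm_def vs'_def vec_eq_iff forall_3)
      have famX: "fam l1 l2 m s = famXY l1 l2 b m X Y" for m unfolding fam_def X_def Y_def b_def ..
      have famX': "fam l1 l2 m (- s) = famXY l1 l2 b m X' Y'" for m unfolding fam_def X'_def Y'_def b_def ..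
      have vs1: "vs \<in> tangent_cone ?W1 ?z"
      proof -
        have d: "((\<lambda>m. famXY l1 l2 b m X Y) has_vector_derivative vs) (at 0)"
          unfolding vs_def dmA_def dmB_def dmD_def by (rule famXY_dm[OF pos(2)])
        have "vs \<in> tangent_cone ?W1 (famXY l1 l2 b 0 X Y)"
          by (rule tc_deriv[OF d]) (use fam_stable[OF l1 l2] famX in metis)
        then show ?thesis using s famX by metis
      qed
      have vu2: "Rm vs' \<in> tangent_cone ?W2 ?z"
      proof -
        have d: "((\<lambda>m. famXY l1 l2 b m X' Y') has_vector_derivative vs') (at 0)"
          unfolding vs'_def dmA_def dmB_def dmD_def by (rule famXY_dm[OF pos(3)])
        have d': "((\<lambda>m. Rm (famXY l1 l2 b m X' Y')) has_vector_derivative Rm vs') (at 0)"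
          by (rule bounded_linear.has_vector_derivative[OF Rm_bl d])
        have "Rm vs' \<in> tangent_cone ?W2 (Rm (famXY l1 l2 b 0 X' Y'))"
          by (rule tc_deriv[OF d']) (use fam_unstable[OF l1 l2] famX' in metis)
        moreover have "Rm (famXY l1 l2 b 0 X' Y') = ?z"
          using fam0_sym[OF pos(1,2) XX] s famX by metis
        ultimately show ?thesis by simp
      qed
      have F1: "?F ?z \<in> tangent_cone ?W1 ?z"
        by (rule traj_tc[OF y]) (rule traj_stable[OF y yT top])
      have F2: "?F ?z \<in> tangent_cone ?W2 ?z"
        by (rule traj_tc[OF y]) (rule traj_unstable[OF y yT bot])
      have det: "(dmA b X Y / dmD X Y) * (- (dmB l1 l2 b X' Y' / (dmD X' Y')^2)) - (dmB l1 l2 b X Y / (dmD X Y)^2) * (dmA b X' Y' / dmD X' Y') \<noteq> 0"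
        by (rule det_nz[OF k XX]) (use l1 l2 bpos pos in simp_all)
      have wV': "inner (fst ?z) (fst w) = 0" "inner (fst w) (snd ?z) + inner (fst ?z) (snd w) = 0"
          "inner (snd ?z) (snd w) = inner (?A (fst ?z)) (?A (fst w))" using wV unfolding V_def by simp_all
      have dd: "\<exists>\<alpha> \<beta> \<gamma>. w = \<alpha> *\<^sub>R ?F ?z + \<beta> *\<^sub>R vs + \<gamma> *\<^sub>R Rm vs'"
        using decomp[OF l1 g det wV'[unfolded zg]] by (simp only: zg[symmetric] vs_def Rvs')
      then obtain \<alpha> \<beta> \<gamma> where dec: "w = \<alpha> *\<^sub>R ?F ?z + \<beta> *\<^sub>R vs + \<gamma> *\<^sub>R Rm vs'" by blast
      have "\<alpha> *\<^sub>R ?F ?z + \<beta> *\<^sub>R vs \<in> span (tangent_cone ?W1 ?z)"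
        by (intro span_add span_scale span_base F1 vs1)
      moreover have "\<gamma> *\<^sub>R Rm vs' \<in> span (tangent_cone ?W2 ?z)"
        by (intro span_scale span_base vu2)
      ultimately show "w \<in> {a + b |a b. a \<in> span (tangent_cone ?W1 ?z) \<and> b \<in> span (tangent_cone ?W2 ?z)}"
        using dec by blast
    qed
    show ?thesis unfolding transversal_at_def using zW1 zW2 sub1 sub2 by blast
  qed
  show ?thesis unfolding F_def P_def P'_def l3 using H1 H2 EX TR by blast
qed


end
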